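(* Let $\mathscr C$ be a small permutative category, let $X\in\Phi(\mathscr C)$, let $u\in\mathcal M$, and write $\mathrm{supp}(X)=\{i_1<\dots<i_m\}$. Then there exists a unique $\widetilde\sigma\in\Sigma_m$ with $u(i_{\widetilde\sigma^{-1}(1)})<\dots<u(i_{\widetilde\sigma^{-1}(m)})$, and, as a morphism $\bigotimes_{j=1}^mX_{i_j}\to\bigotimes_{j=1}^mX_{i_{\widetilde\sigma^{-1}(j)}}$ in $\mathscr C$, the structure isomorphism $[u,1]_X$ is the coherence isomorphism associated to $\widetilde\sigma$.
   Context: A permutative category is a symmetric monoidal category $(\mathscr C,\otimes,\mathbf 1,\tau)$ whose associativity and unit isomorphisms are identities; for $\sigma\in\Sigma_K$ the coherence isomorphism $\bigotimes_{i=1}^KA_i\to\bigotimes_{i=1}^KA_{\sigma^{-1}(i)}$ associated to $\sigma$ is the composite of maps $\mathrm{id}\otimes\tau\otimes\mathrm{id}$ along a decomposition of $\sigma$ into adjacent transpositions. Let $\omega=\{1,2,\dots\}$ and $\mathcal M$ the monoid of injections $\omega\to\omega$. $\Phi(\mathscr C)$ has objects the sequences $X=(X_1,X_2,\dots)$ of objects of $\mathscr C$ with $X_i=\mathbf 1$ for almost all $i$, morphisms $X\to Y$ the morphisms $\bigotimes_{i\in\omega}X_i\to\bigotimes_{i\in\omega}Y_i$ in $\mathscr C$ (ordered tensor product of the non-unit entries), $\mathrm{supp}(X)=\{i:X_i\ne\mathbf 1\}$, $(u_*X)_i=X_j$ if $i=u(j)$ and $\mathbf 1$ if $i\notin\mathrm{im}(u)$,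 and structure isomorphism $[u,1]_X\colon X\to u_*X$ defined as the coherence isomorphism $\bigotimes_{i=1}^KX_i\to\bigotimes_{i=1}^KX_{\sigma^{-1}(i)}=\bigotimes_{i=1}^K(u_*X)_i$ associated to a permutation $\sigma\in\Sigma_K$ with $\sigma(i)=u(i)$ for all $i\le K$ with $X_i\ne\mathbf 1$, where $K$ is chosen with $X_i=\mathbf 1=(u_*X)_i$ for all $i>K$ (independent of choices). *)

theory Defs
  imports "HOL-Combinatorics.Permutations"
begin

text \<open>A small category with a strict monoidal structure and a symmetry:
objects and morphisms are sets of elements of types 'o and 'm (hence small).
cmp g f is the composite g after f.\<close>

record ('o, 'm) pcat =
  obj  :: "'o set"
  mor  :: "'m set"
  dm   :: "'m \<Rightarrow> 'o"
  cd   :: "'m \<Rightarrow> 'o"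
  cmp  :: "'m \<Rightarrow> 'm \<Rightarrow> 'm"
  idm  :: "'o \<Rightarrow> 'm"
  tns  :: "'o \<Rightarrow> 'o \<Rightarrow> 'o"
  tnsm :: "'m \<Rightarrow> 'm \<Rightarrow> 'm"
  unt  :: "'o"
  brd  :: "'o \<Rightarrow> 'o \<Rightarrow> 'm"

definition permutative_category :: "('o, 'm) pcat \<Rightarrow> bool" where
  "permutative_category C \<longleftrightarrow>
     \<comment> \<open>category\<close>
     (\<forall>f\<in>mor C. dm C f \<in> obj C \<and> cd C f \<in> obj C) \<and>
     (\<forall>A\<in>obj C. idm C A \<in> mor C \<and> dm C (idm C A) = A \<and> cd C (idm C A) = A) \<and>
     (\<forall>f\<in>mor C. \<forall>g\<in>mor C. cd C f = dm C g \<longrightarrow>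
        cmp C g f \<in> mor C \<and> dm C (cmp C g f) = dm C f \<and> cd C (cmp C g f) = cd C g) \<and>
     (\<forall>f\<in>mor C. \<forall>g\<in>mor C. \<forall>h\<in>mor C. cd C f = dm C g \<longrightarrow> cd C g = dm C h \<longrightarrow>
        cmp C h (cmp C g f) = cmp C (cmp C h g) f) \<and>
     (\<forall>f\<in>mor C. cmp C f (idm C (dm C f)) = f \<and> cmp C (idm C (cd C f)) f = f) \<and>
     \<comment> \<open>tensor bifunctor\<close>
     unt C \<in> obj C \<and>
     (\<forall>A\<in>obj C. \<forall>B\<in>obj C. tns C A B \<in> obj C) \<and>
     (\<forall>f\<in>mor C. \<forall>g\<in>mor C. tnsm C f g \<in> mor C \<and>
        dm C (tnsm C f g) = tns C (dm C f) (dm C g) \<and> cd C (tnsm C f g) = tns C (cd C f) (cd C g)) \<and>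
     (\<forall>A\<in>obj C. \<forall>B\<in>obj C. tnsm C (idm C A) (idm C B) = idm C (tns C A B)) \<and>
     (\<forall>f\<in>mor C. \<forall>g\<in>mor C. \<forall>f'\<in>mor C. \<forall>g'\<in>mor C. cd C f = dm C g \<longrightarrow> cd C f' = dm C g' \<longrightarrow>
        tnsm C (cmp C g f) (cmp C g' f') = cmp C (tnsm C g g') (tnsm C f f')) \<and>
     \<comment> \<open>strict associativity and unit\<close>
     (\<forall>A\<in>obj C. \<forall>B\<in>obj C. \<forall>D\<in>obj C. tns C (tns C A B) D = tns C A (tns C B D)) \<and>
     (\<forall>f\<in>mor C. \<forall>g\<in>mor C. \<forall>h\<in>mor C. tnsm C (tnsm C f g) h = tnsm C f (tnsm C g h)) \<and>
     (\<forall>A\<in>obj C. tns C (unt C) A = A \<and> tns C A (unt C) = A) \<and>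
     (\<forall>f\<in>mor C. tnsm C (idm C (unt C)) f = f \<and> tnsm C f (idm C (unt C)) = f) \<and>
     \<comment> \<open>symmetry\<close>
     (\<forall>A\<in>obj C. \<forall>B\<in>obj C. brd C A B \<in> mor C \<and>
        dm C (brd C A B) = tns C A B \<and> cd C (brd C A B) = tns C B A) \<and>
     (\<forall>f\<in>mor C. \<forall>g\<in>mor C.
        cmp C (brd C (cd C f) (cd C g)) (tnsm C f g) = cmp C (tnsm C g f) (brd C (dm C f) (dm C g))) \<and>
     (\<forall>A\<in>obj C. \<forall>B\<in>obj C. cmp C (brd C B A) (brd C A B) = idm C (tns C A B)) \<and>
     (\<forall>A\<in>obj C. \<forall>B\<in>obj C. \<forall>D\<in>obj C.
        brd C A (tns C B D) = cmp C (tnsm C (idm C B) (brd C A D)) (tnsm C (brd C A B) (idm C D))) \<and>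
     (\<forall>A\<in>obj C. brd C A (unt C) = idm C A)"

definition tprod :: "('o, 'm) pcat \<Rightarrow> (nat \<Rightarrow> 'o) \<Rightarrow> nat \<Rightarrow> nat \<Rightarrow> 'o" where
  "tprod C A a b = foldr (tns C) (map A [a..<Suc b]) (unt C)"

definition adj :: "nat \<Rightarrow> nat \<Rightarrow> nat" where
  "adj j = (\<lambda>i. if i = j then Suc j else if i = Suc j then j else i)"

definition swapmap :: "('o, 'm) pcat \<Rightarrow> (nat \<Rightarrow> 'o) \<Rightarrow> nat \<Rightarrow> nat \<Rightarrow> 'm" where
  "swapmap C A K j =
     tnsm C (tnsm C (idm C (tprod C A 1 (j - 1))) (brd C (A j) (A (Suc j))))
            (idm C (tprod C A (j + 2) K))"

text \<open>coh_rel C A K \<sigma> f: f is the composite of maps id \<otimes> \<tau> \<otimes> id along some decomposition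
of \<sigma> into adjacent transpositions; f goes from A_1\<otimes>...\<otimes>A_K to A_{\<sigma>^{-1}(1)}\<otimes>...\<otimes>A_{\<sigma>^{-1}(K)}.\<close>
inductive coh_rel :: "('o, 'm) pcat \<Rightarrow> (nat \<Rightarrow> 'o) \<Rightarrow> nat \<Rightarrow> (nat \<Rightarrow> nat) \<Rightarrow> 'm \<Rightarrow> bool"
  for C A K where
  base: "coh_rel C A K id (idm C (tprod C A 1 K))"
| step: "coh_rel C A K \<sigma> f \<Longrightarrow> 1 \<le> j \<Longrightarrow> j < K \<Longrightarrow>
         coh_rel C A K (adj j \<circ> \<sigma>) (cmp C (swapmap C (A \<circ> inv \<sigma>) K j) f)"

definition coh_iso :: "('o, 'm) pcat \<Rightarrow> (nat \<Rightarrow> 'o) \<Rightarrow> nat \<Rightarrow> (nat \<Rightarrow> nat) \<Rightarrow> 'm" where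
  "coh_iso C A K \<sigma> = (SOME f. coh_rel C A K \<sigma> f)"

text \<open>Objects of \<Phi>(C): sequences indexed by \<omega> = {1,2,...} (value at 0 ignored).\<close>
definition supp :: "('o, 'm) pcat \<Rightarrow> (nat \<Rightarrow> 'o) \<Rightarrow> nat set" where
  "supp C X = {i. 1 \<le> i \<and> X i \<noteq> unt C}"

definition Phi_obj :: "('o, 'm) pcat \<Rightarrow> (nat \<Rightarrow> 'o) \<Rightarrow> bool" where
  "Phi_obj C X \<longleftrightarrow> (\<forall>i\<ge>1. X i \<in> obj C) \<and> finite (supp C X)"

definition inj_omega :: "(nat \<Rightarrow> nat) \<Rightarrow> bool" where
  "inj_omega u \<longleftrightarrow> inj_on u {1..} \<and> u ` {1..} \<subseteq> {1..}"

definition push :: "('o, 'm) pcat \<Rightarrow> (nat \<Rightarrow> nat) \<Rightarrow> (nat \<Rightarrow> 'o) \<Rightarrow> nat \<Rightarrow> 'o" where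
  "push C u X i = (if i \<in> u ` {1..} then X (the_inv_into {1..} u i) else unt C)"

definition struct_iso :: "('o, 'm) pcat \<Rightarrow> (nat \<Rightarrow> nat) \<Rightarrow> (nat \<Rightarrow> 'o) \<Rightarrow> 'm" where
  "struct_iso C u X = (SOME f. \<exists>K \<sigma>.
      (\<forall>i>K. X i = unt C \<and> push C u X i = unt C) \<and>
      \<sigma> permutes {1..K} \<and>
      (\<forall>i\<in>{1..K}. X i \<noteq> unt C \<longrightarrow> \<sigma> i = u i) \<and>
      f = coh_iso C X K \<sigma>)"

end

theory Submission
  imports Defs "HOL-Library.Multiset"
begin

definition ord :: "(nat \<Rightarrow> nat) \<Rightarrow> nat set \<Rightarrow> nat list" where
  "ord k U = sort_key k (sorted_list_of_set U)"

lemma ord_props: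
  assumes "finite U"
  shows "distinct (ord k U)" "set (ord k U) = U" "sorted (map k (ord k U))"
  using assms by (auto simp: ord_def)

lemma ord_char:
  assumes "finite U" "inj_on k U" "distinct ys" "set ys = U" "sorted (map k ys)"
  shows "ord k U = ys"
  unfolding ord_def
proof (rule sort_key_inj_key_eq)
  show "mset (sorted_list_of_set U) = mset ys"
    using assms by (simp add: set_eq_iff_mset_eq_distinct[symmetric])
  show "inj_on k (set (sorted_list_of_set U))" using assms by simp
  show "sorted (map k ys)" by fact
qed

lemma ord_split:
  assumes "finite U" "inj_on k U" "\<And>a b. a \<le> b \<Longrightarrow> P b \<Longrightarrow> P a"
  shows "ord k U = ord k {q\<in>U. P (k q)} @ ord k {q\<in>U. \<not> P (k q)}"
proof (rule ord_char)
  have f1: "finite {q\<in>U. P (k q)}" "finite {q\<in>U. \<not> P (k q)}" using assms by auto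
  show "finite U" "inj_on k U" by fact+
  show "distinct (ord k {q \<in> U. P (k q)} @ ord k {q \<in> U. \<not> P (k q)})"
    using f1 by (auto simp: ord_props)
  show "set (ord k {q \<in> U. P (k q)} @ ord k {q \<in> U. \<not> P (k q)}) = U"
    using f1 by (auto simp: ord_props)
  show "sorted (map k (ord k {q \<in> U. P (k q)} @ ord k {q \<in> U. \<not> P (k q)}))"
    unfolding map_append sorted_append using f1 ord_props(2,3)[OF f1(1)] ord_props(2,3)[OF f1(2)]
    apply auto
    by (metis assms(3) nat_le_linear)
qed

lemma ord_empty[simp]: "ord k {} = []" by (simp add: ord_def)
lemma ord_single[simp]: "ord k {i} = [i]" by (simp add: ord_def)

lemma ord_cong:
  assumes "finite U" "inj_on k U" "\<And>a b. a \<in> U \<Longrightarrow> b \<in> U \<Longrightarrow> k a < k b \<longleftrightarrow> k' a < k' b"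
  shows "ord k' U = ord k U"
proof (rule ord_char)
  show "finite U" by fact
  show "inj_on k' U"
  proof (rule inj_onI)
    fix a b assume "a \<in> U" "b \<in> U" "k' a = k' b"
    then show "a = b" using assms(3)[of a b] assms(3)[of b a] assms(2)
      by (metis inj_on_contraD less_irrefl nat_neq_iff)
  qed
  show "distinct (ord k U)" "set (ord k U) = U" using assms ord_props by auto
  have "sorted_wrt (\<le>) (map k (ord k U))" using ord_props(3)[OF assms(1)] by simp
  show "sorted (map k' (ord k U))"
    unfolding sorted_wrt_map sorted_map
  proof -
    have s: "sorted_wrt (\<lambda>a b. k a \<le> k b) (ord k U)" using ord_props(3)[OF assms(1)] by (simp add: sorted_map)
    show "sorted_wrt (\<lambda>a b. k' a \<le> k' b) (ord k U)"
    proof (rule sorted_wrt_mono_rel[OF _ s])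
      fix x y assume xy: "x \<in> set (ord k U)" "y \<in> set (ord k U)" "k x \<le> k y"
      then have "x \<in> U" "y \<in> U" using ord_props(2)[OF assms(1)] by auto
      then show "k' x \<le> k' y" using xy(3) assms(3)[of x y] assms(2)
        by (cases "x = y") (auto simp: inj_on_def order_le_less)
    qed
  qed
qed


locale pc =
  fixes C :: "('o, 'm) pcat"
  assumes PC: "permutative_category C"
begin

lemmas P = PC[unfolded permutative_category_def]

lemma ax1: "\<And>f. f\<in>mor C \<Longrightarrow> dm C f \<in> obj C"
  using P[THEN conjunct1] by blast
lemma ax2: "\<And>f. f\<in>mor C \<Longrightarrow> cd C f \<in> obj C"
  using P[THEN conjunct1] by blast
lemma ax3: "\<And>A. A\<in>obj C \<Longrightarrow> idm C A \<in> mor C"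
  using P[THEN conjunct2, THEN conjunct1] by blast
lemma ax4: "\<And>A. A\<in>obj C \<Longrightarrow> dm C (idm C A) = A"
  using P[THEN conjunct2, THEN conjunct1] by blast
lemma ax5: "\<And>A. A\<in>obj C \<Longrightarrow> cd C (idm C A) = A"
  using P[THEN conjunct2, THEN conjunct1] by blast
lemma ax6: "\<And>f g. f\<in>mor C \<Longrightarrow> g\<in>mor C \<Longrightarrow> cd C f = dm C g \<Longrightarrow> cmp C g f \<in> mor C"
  using P[THEN conjunct2, THEN conjunct2, THEN conjunct1] by blast
lemma ax7: "\<And>f g. f\<in>mor C \<Longrightarrow> g\<in>mor C \<Longrightarrow> cd C f = dm C g \<Longrightarrow> dm C (cmp C g f) = dm C f"
  using P[THEN conjunct2, THEN conjunct2, THEN conjunct1] by blast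
lemma ax8: "\<And>f g. f\<in>mor C \<Longrightarrow> g\<in>mor C \<Longrightarrow> cd C f = dm C g \<Longrightarrow> cd C (cmp C g f) = cd C g"
  using P[THEN conjunct2, THEN conjunct2, THEN conjunct1] by blast
lemma ax9: "\<And>f g h. f\<in>mor C \<Longrightarrow> g\<in>mor C \<Longrightarrow> h\<in>mor C \<Longrightarrow> cd C f = dm C g \<Longrightarrow> cd C g = dm C h \<Longrightarrow>
        cmp C h (cmp C g f) = cmp C (cmp C h g) f"
  using P[THEN conjunct2, THEN conjunct2, THEN conjunct2, THEN conjunct1] by blast
lemma ax10: "\<And>f. f\<in>mor C \<Longrightarrow> cmp C f (idm C (dm C f)) = f"
  using P[THEN conjunct2, THEN conjunct2, THEN conjunct2, THEN conjunct2, THEN conjunct1] by blast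
lemma ax11: "\<And>f. f\<in>mor C \<Longrightarrow> cmp C (idm C (cd C f)) f = f"
  using P[THEN conjunct2, THEN conjunct2, THEN conjunct2, THEN conjunct2, THEN conjunct1] by blast
lemma ax12: "unt C \<in> obj C"
  using P[THEN conjunct2, THEN conjunct2, THEN conjunct2, THEN conjunct2, THEN conjunct2, THEN conjunct1] by blast
lemma ax13: "\<And>A B. A\<in>obj C \<Longrightarrow> B\<in>obj C \<Longrightarrow> tns C A B \<in> obj C"
  using P[THEN conjunct2, THEN conjunct2, THEN conjunct2, THEN conjunct2, THEN conjunct2, THEN conjunct2, THEN conjunct1] by blast
lemma ax14: "\<And>f g. f\<in>mor C \<Longrightarrow> g\<in>mor C \<Longrightarrow> tnsm C f g \<in> mor C"
  using P[THEN conjunct2, THEN conjunct2, THEN conjunct2, THEN conjunct2, THEN conjunct2, THEN conjunct2, THEN conjunct2, THEN conjunct1] by blast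
lemma ax15: "\<And>f g. f\<in>mor C \<Longrightarrow> g\<in>mor C \<Longrightarrow> dm C (tnsm C f g) = tns C (dm C f) (dm C g)"
  using P[THEN conjunct2, THEN conjunct2, THEN conjunct2, THEN conjunct2, THEN conjunct2, THEN conjunct2, THEN conjunct2, THEN conjunct1] by blast
lemma ax16: "\<And>f g. f\<in>mor C \<Longrightarrow> g\<in>mor C \<Longrightarrow> cd C (tnsm C f g) = tns C (cd C f) (cd C g)"
  using P[THEN conjunct2, THEN conjunct2, THEN conjunct2, THEN conjunct2, THEN conjunct2, THEN conjunct2, THEN conjunct2, THEN conjunct1] by blast
lemma ax17: "\<And>A B. A\<in>obj C \<Longrightarrow> B\<in>obj C \<Longrightarrow> tnsm C (idm C A) (idm C B) = idm C (tns C A B)"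
  using P[THEN conjunct2, THEN conjunct2, THEN conjunct2, THEN conjunct2, THEN conjunct2, THEN conjunct2, THEN conjunct2, THEN conjunct2, THEN conjunct1] by blast
lemma ax18: "\<And>f g f' g'. f\<in>mor C \<Longrightarrow> g\<in>mor C \<Longrightarrow> f'\<in>mor C \<Longrightarrow> g'\<in>mor C \<Longrightarrow> cd C f = dm C g \<Longrightarrow> cd C f' = dm C g' \<Longrightarrow>
        tnsm C (cmp C g f) (cmp C g' f') = cmp C (tnsm C g g') (tnsm C f f')"
  using P[THEN conjunct2, THEN conjunct2, THEN conjunct2, THEN conjunct2, THEN conjunct2, THEN conjunct2, THEN conjunct2, THEN conjunct2, THEN conjunct2, THEN conjunct1] by blast
lemma ax19: "\<And>A B D. A\<in>obj C \<Longrightarrow> B\<in>obj C \<Longrightarrow> D\<in>obj C \<Longrightarrow> tns C (tns C A B) D = tns C A (tns C B D)"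
  using P[THEN conjunct2, THEN conjunct2, THEN conjunct2, THEN conjunct2, THEN conjunct2, THEN conjunct2, THEN conjunct2, THEN conjunct2, THEN conjunct2, THEN conjunct2, THEN conjunct1] by blast
lemma ax20: "\<And>f g h. f\<in>mor C \<Longrightarrow> g\<in>mor C \<Longrightarrow> h\<in>mor C \<Longrightarrow> tnsm C (tnsm C f g) h = tnsm C f (tnsm C g h)"
  using P[THEN conjunct2, THEN conjunct2, THEN conjunct2, THEN conjunct2, THEN conjunct2, THEN conjunct2, THEN conjunct2, THEN conjunct2, THEN conjunct2, THEN conjunct2, THEN conjunct2, THEN conjunct1] by blast
lemma ax21: "\<And>A. A\<in>obj C \<Longrightarrow> tns C (unt C) A = A"
  using P[THEN conjunct2, THEN conjunct2, THEN conjunct2, THEN conjunct2, THEN conjunct2, THEN conjunct2, THEN conjunct2, THEN conjunct2, THEN conjunct2, THEN conjunct2, THEN conjunct2, THEN conjunct2, THEN conjunct1] by blast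
lemma ax22: "\<And>A. A\<in>obj C \<Longrightarrow> tns C A (unt C) = A"
  using P[THEN conjunct2, THEN conjunct2, THEN conjunct2, THEN conjunct2, THEN conjunct2, THEN conjunct2, THEN conjunct2, THEN conjunct2, THEN conjunct2, THEN conjunct2, THEN conjunct2, THEN conjunct2, THEN conjunct1] by blast
lemma ax23: "\<And>f. f\<in>mor C \<Longrightarrow> tnsm C (idm C (unt C)) f = f"
  using P[THEN conjunct2, THEN conjunct2, THEN conjunct2, THEN conjunct2, THEN conjunct2, THEN conjunct2, THEN conjunct2, THEN conjunct2, THEN conjunct2, THEN conjunct2, THEN conjunct2, THEN conjunct2, THEN conjunct2, THEN conjunct1] by blast
lemma ax24: "\<And>f. f\<in>mor C \<Longrightarrow> tnsm C f (idm C (unt C)) = f"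
  using P[THEN conjunct2, THEN conjunct2, THEN conjunct2, THEN conjunct2, THEN conjunct2, THEN conjunct2, THEN conjunct2, THEN conjunct2, THEN conjunct2, THEN conjunct2, THEN conjunct2, THEN conjunct2, THEN conjunct2, THEN conjunct1] by blast
lemma ax25: "\<And>A B. A\<in>obj C \<Longrightarrow> B\<in>obj C \<Longrightarrow> brd C A B \<in> mor C"
  using P[THEN conjunct2, THEN conjunct2, THEN conjunct2, THEN conjunct2, THEN conjunct2, THEN conjunct2, THEN conjunct2, THEN conjunct2, THEN conjunct2, THEN conjunct2, THEN conjunct2, THEN conjunct2, THEN conjunct2, THEN conjunct2, THEN conjunct1] by blast
lemma ax26: "\<And>A B. A\<in>obj C \<Longrightarrow> B\<in>obj C \<Longrightarrow> dm C (brd C A B) = tns C A B"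
  using P[THEN conjunct2, THEN conjunct2, THEN conjunct2, THEN conjunct2, THEN conjunct2, THEN conjunct2, THEN conjunct2, THEN conjunct2, THEN conjunct2, THEN conjunct2, THEN conjunct2, THEN conjunct2, THEN conjunct2, THEN conjunct2, THEN conjunct1] by blast
lemma ax27: "\<And>A B. A\<in>obj C \<Longrightarrow> B\<in>obj C \<Longrightarrow> cd C (brd C A B) = tns C B A"
  using P[THEN conjunct2, THEN conjunct2, THEN conjunct2, THEN conjunct2, THEN conjunct2, THEN conjunct2, THEN conjunct2, THEN conjunct2, THEN conjunct2, THEN conjunct2, THEN conjunct2, THEN conjunct2, THEN conjunct2, THEN conjunct2, THEN conjunct1] by blast
lemma ax28: "\<And>f g. f\<in>mor C \<Longrightarrow> g\<in>mor C \<Longrightarrow>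
        cmp C (brd C (cd C f) (cd C g)) (tnsm C f g) = cmp C (tnsm C g f) (brd C (dm C f) (dm C g))"
  using P[THEN conjunct2, THEN conjunct2, THEN conjunct2, THEN conjunct2, THEN conjunct2, THEN conjunct2, THEN conjunct2, THEN conjunct2, THEN conjunct2, THEN conjunct2, THEN conjunct2, THEN conjunct2, THEN conjunct2, THEN conjunct2, THEN conjunct2, THEN conjunct1] by blast
lemma ax29: "\<And>A B. A\<in>obj C \<Longrightarrow> B\<in>obj C \<Longrightarrow> cmp C (brd C B A) (brd C A B) = idm C (tns C A B)"
  using P[THEN conjunct2, THEN conjunct2, THEN conjunct2, THEN conjunct2, THEN conjunct2, THEN conjunct2, THEN conjunct2, THEN conjunct2, THEN conjunct2, THEN conjunct2, THEN conjunct2, THEN conjunct2, THEN conjunct2, THEN conjunct2, THEN conjunct2, THEN conjunct2, THEN conjunct1] by blast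
lemma ax30: "\<And>A B D. A\<in>obj C \<Longrightarrow> B\<in>obj C \<Longrightarrow> D\<in>obj C \<Longrightarrow>
        brd C A (tns C B D) = cmp C (tnsm C (idm C B) (brd C A D)) (tnsm C (brd C A B) (idm C D))"
  using P[THEN conjunct2, THEN conjunct2, THEN conjunct2, THEN conjunct2, THEN conjunct2, THEN conjunct2, THEN conjunct2, THEN conjunct2, THEN conjunct2, THEN conjunct2, THEN conjunct2, THEN conjunct2, THEN conjunct2, THEN conjunct2, THEN conjunct2, THEN conjunct2, THEN conjunct2, THEN conjunct1] by blast
lemma ax31: "\<And>A. A\<in>obj C \<Longrightarrow> brd C A (unt C) = idm C A"
  using P[THEN conjunct2, THEN conjunct2, THEN conjunct2, THEN conjunct2, THEN conjunct2, THEN conjunct2, THEN conjunct2, THEN conjunct2, THEN conjunct2, THEN conjunct2, THEN conjunct2, THEN conjunct2, THEN conjunct2, THEN conjunct2, THEN conjunct2, THEN conjunct2, THEN conjunct2, THEN conjunct2] by blast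
lemmas ax = ax1 ax2 ax3 ax4 ax5 ax6 ax7 ax8 ax9 ax10 ax11 ax12 ax13 ax14 ax15 ax16 ax17 ax18 ax19 ax20 ax21 ax22 ax23 ax24 ax25 ax26 ax27 ax28 ax29 ax30 ax31

lemmas [simp] = ax(1-8) ax(12-16) ax(19-24) ax(25-27)
lemmas [intro] = ax(3) ax(6) ax(13) ax(14) ax(25)

lemma tnsm_id[simp]: "A\<in>obj C \<Longrightarrow> B\<in>obj C \<Longrightarrow> tnsm C (idm C A) (idm C B) = idm C (tns C A B)"
  by (rule ax(17))

lemma cmp_assoc: "f\<in>mor C \<Longrightarrow> g\<in>mor C \<Longrightarrow> h\<in>mor C \<Longrightarrow> cd C f = dm C g \<Longrightarrow> cd C g = dm C h \<Longrightarrow>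
        cmp C (cmp C h g) f = cmp C h (cmp C g f)"
  by (simp add: ax(9))

lemma id_left[simp]: "f\<in>mor C \<Longrightarrow> cd C f = A \<Longrightarrow> cmp C (idm C A) f = f"
  using ax(11) by blast
lemma id_right[simp]: "f\<in>mor C \<Longrightarrow> dm C f = A \<Longrightarrow> cmp C f (idm C A) = f"
  using ax(10) by blast

lemma interchange: "f\<in>mor C \<Longrightarrow> g\<in>mor C \<Longrightarrow> f'\<in>mor C \<Longrightarrow> g'\<in>mor C \<Longrightarrow> cd C f = dm C g \<Longrightarrow> cd C f' = dm C g' \<Longrightarrow>
        cmp C (tnsm C g g') (tnsm C f f') = tnsm C (cmp C g f) (cmp C g' f')"
  by (simp add: ax(18))

lemma brd_nat: "f\<in>mor C \<Longrightarrow> g\<in>mor C \<Longrightarrow>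
        cmp C (brd C (cd C f) (cd C g)) (tnsm C f g) = cmp C (tnsm C g f) (brd C (dm C f) (dm C g))"
  by (rule ax(28))

lemma brd_sym: "A\<in>obj C \<Longrightarrow> B\<in>obj C \<Longrightarrow> cmp C (brd C B A) (brd C A B) = idm C (tns C A B)"
  by (rule ax(29))

lemma hex1: "A\<in>obj C \<Longrightarrow> B\<in>obj C \<Longrightarrow> D\<in>obj C \<Longrightarrow>
        brd C A (tns C B D) = cmp C (tnsm C (idm C B) (brd C A D)) (tnsm C (brd C A B) (idm C D))"
  by (rule ax(30))

lemma brd_unt_right[simp]: "A\<in>obj C \<Longrightarrow> brd C A (unt C) = idm C A"
  by (rule ax(31))

lemma brd_unt_left[simp]: "A\<in>obj C \<Longrightarrow> brd C (unt C) A = idm C A"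
proof -
  assume A: "A \<in> obj C"
  have "cmp C (brd C A (unt C)) (brd C (unt C) A) = idm C (tns C (unt C) A)"
    using brd_sym[of "unt C" A] A by simp
  then show ?thesis using A by simp
qed

lemma hex2:
  assumes A: "A\<in>obj C" and B: "B\<in>obj C" and D: "D\<in>obj C"
  shows "brd C (tns C B D) A = cmp C (tnsm C (brd C B A) (idm C D)) (tnsm C (idm C B) (brd C D A))"
proof -
  define h where "h = brd C A (tns C B D)"
  define h' where "h' = cmp C (tnsm C (brd C B A) (idm C D)) (tnsm C (idm C B) (brd C D A))"
  have hh: "h = cmp C (tnsm C (idm C B) (brd C A D)) (tnsm C (brd C A B) (idm C D))"
    unfolding h_def using hex1 A B D by simp
  have "cmp C h' h = cmp C (tnsm C (brd C B A) (idm C D))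
      (cmp C (cmp C (tnsm C (idm C B) (brd C D A)) (tnsm C (idm C B) (brd C A D))) (tnsm C (brd C A B) (idm C D)))"
    unfolding hh h'_def using A B D by (simp add: cmp_assoc)
  also have "cmp C (tnsm C (idm C B) (brd C D A)) (tnsm C (idm C B) (brd C A D)) = idm C (tns C B (tns C A D))"
    using A B D by (simp add: interchange brd_sym)
  also have "cmp C (tnsm C (brd C B A) (idm C D)) (cmp C (idm C (tns C B (tns C A D))) (tnsm C (brd C A B) (idm C D)))
     = idm C (tns C A (tns C B D))"
    using A B D by (simp add: interchange brd_sym)
  finally have 1: "cmp C h' h = idm C (tns C A (tns C B D))" .
  have h'm: "h' \<in> mor C" "dm C h' = tns C B (tns C D A)" "cd C h' = tns C A (tns C B D)"
    unfolding h'_def using A B D by auto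
  have "brd C (tns C B D) A = cmp C (cmp C h' h) (brd C (tns C B D) A)"
    using 1 A B D by simp
  also have "\<dots> = cmp C h' (cmp C h (brd C (tns C B D) A))"
    using h'm A B D unfolding h_def by (simp add: cmp_assoc)
  also have "\<dots> = h'" unfolding h_def using brd_sym[of "tns C B D" A] A B D h'm by simp
  finally show ?thesis unfolding h'_def .
qed

end


definition T :: "('o, 'm) pcat \<Rightarrow> (nat \<Rightarrow> 'o) \<Rightarrow> nat list \<Rightarrow> 'o" where
  "T C A xs = foldr (tns C) (map A xs) (unt C)"

fun canonr :: "('o, 'm) pcat \<Rightarrow> (nat \<Rightarrow> 'o) \<Rightarrow> (nat \<Rightarrow> nat) \<Rightarrow> nat list \<Rightarrow> 'm" where
  "canonr C A k [] = idm C (unt C)"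
| "canonr C A k (i # rs) = cmp C
     (tnsm C (idm C (T C A (ord k {j\<in>set rs. k j < k i})))
             (brd C (T C A (ord k {j\<in>set rs. k i < k j})) (A i)))
     (tnsm C (canonr C A k rs) (idm C (A i)))"

definition canon :: "('o, 'm) pcat \<Rightarrow> (nat \<Rightarrow> 'o) \<Rightarrow> (nat \<Rightarrow> nat) \<Rightarrow> nat list \<Rightarrow> 'm" where
  "canon C A k xs = canonr C A k (rev xs)"

lemma canon_Nil[simp]: "canon C A k [] = idm C (unt C)"
  by (simp add: canon_def)

lemma canon_snoc: "canon C A k (xs @ [i]) = cmp C
     (tnsm C (idm C (T C A (ord k {j\<in>set xs. k j < k i})))
             (brd C (T C A (ord k {j\<in>set xs. k i < k j})) (A i)))
     (tnsm C (canon C A k xs) (idm C (A i)))"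
  by (simp add: canon_def)

lemma ord_insert:
  assumes "finite S" "i \<notin> S" "inj_on k (insert i S)"
  shows "ord k (insert i S) = ord k {q\<in>S. k q < k i} @ [i] @ ord k {q\<in>S. k i < k q}"
proof (rule ord_char)
  have f: "finite {q\<in>S. k q < k i}" "finite {q\<in>S. k i < k q}" using assms by auto
  show "finite (insert i S)" "inj_on k (insert i S)" using assms by auto
  show "distinct (ord k {q \<in> S. k q < k i} @ [i] @ ord k {q \<in> S. k i < k q})"
    using f assms by (auto simp: ord_props)
  show "set (ord k {q \<in> S. k q < k i} @ [i] @ ord k {q \<in> S. k i < k q}) = insert i S"
    using f assms(2,3) by (auto simp: ord_props inj_on_def)
  show "sorted (map k (ord k {q \<in> S. k q < k i} @ [i] @ ord k {q \<in> S. k i < k q}))"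
    unfolding map_append sorted_append using f ord_props(2,3)[OF f(1)] ord_props(2,3)[OF f(2)]
    by (auto intro: less_imp_le)
qed

context pc
begin

lemma T_Nil[simp]: "T C A [] = unt C" by (simp add: T_def)

lemma T_obj[simp, intro]: "(\<And>i. i \<in> set xs \<Longrightarrow> A i \<in> obj C) \<Longrightarrow> T C A xs \<in> obj C"
  by (induct xs) (auto simp: T_def)

lemma T_Cons: "T C A (i # xs) = tns C (A i) (T C A xs)" by (simp add: T_def)

lemma T_single[simp]: "A i \<in> obj C \<Longrightarrow> T C A [i] = A i" by (simp add: T_def)

lemma T_append: "(\<And>i. i \<in> set xs \<Longrightarrow> A i \<in> obj C) \<Longrightarrow> (\<And>i. i \<in> set ys \<Longrightarrow> A i \<in> obj C) \<Longrightarrow>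
   T C A (xs @ ys) = tns C (T C A xs) (T C A ys)"
  by (induct xs) (auto simp: T_Cons)

lemma T_snoc: "(\<And>j. j \<in> set xs \<Longrightarrow> A j \<in> obj C) \<Longrightarrow> A i \<in> obj C \<Longrightarrow>
   T C A (xs @ [i]) = tns C (T C A xs) (A i)"
  by (subst T_append) auto

lemma T_filter_unt: "(\<And>i. i \<in> set xs \<Longrightarrow> A i \<in> obj C) \<Longrightarrow>
   T C A (filter (\<lambda>i. A i \<noteq> unt C) xs) = T C A xs"
  by (induct xs) (auto simp: T_Cons)

lemma T_map: "T C A (map g xs) = T C (A \<circ> g) xs" by (simp add: T_def)

lemma T_ord_insert:
  assumes "finite S" "i \<notin> S" "inj_on k (insert i S)" "\<And>q. q \<in> insert i S \<Longrightarrow> A q \<in> obj C"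
  shows "T C A (ord k (insert i S)) = tns C (T C A (ord k {q\<in>S. k q < k i}))
            (tns C (A i) (T C A (ord k {q\<in>S. k i < k q})))"
proof -
  have f: "finite {q\<in>S. k q < k i}" "finite {q\<in>S. k i < k q}" using assms by auto
  show ?thesis
    unfolding ord_insert[OF assms(1-3)] using assms f
    by (subst T_append, auto simp: ord_props T_Cons)+
qed

lemma canon_typ:
  assumes "distinct xs" "inj_on k (set xs)" "\<And>i. i \<in> set xs \<Longrightarrow> A i \<in> obj C"
  shows "canon C A k xs \<in> mor C \<and> dm C (canon C A k xs) = T C A xs \<and>
         cd C (canon C A k xs) = T C A (ord k (set xs))"
  using assms
proof (induct xs rule: rev_induct)
  case Nil
  then show ?case by simp
next
  case (snoc i xs)
  let ?S = "set xs"
  have IH: "canon C A k xs \<in> mor C" "dm C (canon C A k xs) = T C A xs"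
    "cd C (canon C A k xs) = T C A (ord k ?S)"
    using snoc by (auto simp: inj_on_def)
  have fs: "finite {j\<in>?S. k j < k i}" "finite {j\<in>?S. k i < k j}" by auto
  have ob: "T C A (ord k {j\<in>?S. k j < k i}) \<in> obj C" "T C A (ord k {j\<in>?S. k i < k j}) \<in> obj C"
    using snoc(4) fs by (auto simp: ord_props)
  have ai: "A i \<in> obj C" using snoc by auto
  have cdx: "T C A (ord k ?S) = tns C (T C A (ord k {j\<in>?S. k j < k i})) (T C A (ord k {j\<in>?S. k i < k j}))"
  proof -
    have e: "{j\<in>?S. \<not> k j < k i} = {j\<in>?S. k i < k j}"
      using snoc(2,3) by (auto simp: inj_on_def order_le_less)
    have "ord k ?S = ord k {j\<in>?S. k j < k i} @ ord k {j\<in>?S. \<not> k j < k i}"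
      by (rule ord_split) (use snoc(3) in \<open>auto simp: inj_on_def\<close>)
    then show ?thesis unfolding e using snoc(4) fs by (simp only:) (subst T_append, auto simp: ord_props)
  qed
  have cdi: "T C A (ord k (set (xs @ [i]))) = tns C (T C A (ord k {j\<in>?S. k j < k i}))
            (tns C (A i) (T C A (ord k {j\<in>?S. k i < k j})))"
    using T_ord_insert[of ?S i k A] snoc(2,3,4) by auto
  show ?case
    unfolding canon_snoc using IH ob ai cdx cdi snoc(4)
    by (auto simp: T_snoc)
qed


lemma T_ord_split:
  assumes "finite S" "p \<notin> k ` S" "inj_on k S" "\<And>q. q \<in> S \<Longrightarrow> A q \<in> obj C"
  shows "T C A (ord k S) = tns C (T C A (ord k {j\<in>S. k j < p})) (T C A (ord k {j\<in>S. p < k j}))"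
proof -
  have fs: "finite {j\<in>S. k j < p}" "finite {j\<in>S. p < k j}" using assms by auto
  have e: "{j\<in>S. \<not> k j < p} = {j\<in>S. p < k j}"
    using assms(2) by (auto simp: order_le_less)
  have "ord k S = ord k {j\<in>S. k j < p} @ ord k {j\<in>S. \<not> k j < p}"
    by (rule ord_split) (use assms in auto)
  then show ?thesis unfolding e using assms(4) fs by (simp only:) (subst T_append, auto simp: ord_props)
qed

lemma canon_cong:
  assumes "distinct xs" "inj_on k (set xs)" "\<And>a b. a \<in> set xs \<Longrightarrow> b \<in> set xs \<Longrightarrow> k a < k b \<longleftrightarrow> k' a < k' b"
  shows "canon C A k' xs = canon C A k xs"
  using assms
proof (induct xs rule: rev_induct)
  case Nil
  then show ?case by simp
next
  case (snoc i xs)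
  have IH: "canon C A k' xs = canon C A k xs" using snoc by (auto simp: inj_on_def)
  have e1: "{j\<in>set xs. k' j < k' i} = {j\<in>set xs. k j < k i}" using snoc(4) by auto
  have e2: "{j\<in>set xs. k' i < k' j} = {j\<in>set xs. k i < k j}" using snoc(4) by auto
  have o1: "ord k' {j\<in>set xs. k j < k i} = ord k {j\<in>set xs. k j < k i}"
    by (rule ord_cong) (use snoc(3,4) in \<open>auto simp: inj_on_def\<close>)
  have o2: "ord k' {j\<in>set xs. k i < k j} = ord k {j\<in>set xs. k i < k j}"
    by (rule ord_cong) (use snoc(3,4) in \<open>auto simp: inj_on_def\<close>)
  show ?case unfolding canon_snoc e1 e2 o1 o2 IH ..
qed

lemma ord_filter:
  assumes "finite U" "inj_on k U"
  shows "ord k {j\<in>U. P j} = filter P (ord k U)"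
proof (rule ord_char)
  show "finite {j\<in>U. P j}" "inj_on k {j\<in>U. P j}" using assms by (auto simp: inj_on_def)
  show "distinct (filter P (ord k U))" "set (filter P (ord k U)) = {j \<in> U. P j}"
    using assms by (auto simp: ord_props)
  show "sorted (map k (filter P (ord k U)))"
    using ord_props(3)[OF assms(1), of k] by (simp add: sorted_filter)
qed

lemma T_ord_filter_unt:
  assumes "finite U" "inj_on k U" "\<And>q. q \<in> U \<Longrightarrow> A q \<in> obj C"
  shows "T C A (ord k {j\<in>U. A j \<noteq> unt C}) = T C A (ord k U)"
  unfolding ord_filter[OF assms(1,2)] using assms by (subst T_filter_unt) (auto simp: ord_props)

lemma canon_filter_unt:
  assumes "distinct xs" "inj_on k (set xs)" "\<And>i. i \<in> set xs \<Longrightarrow> A i \<in> obj C"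
  shows "canon C A k (filter (\<lambda>i. A i \<noteq> unt C) xs) = canon C A k xs"
  using assms
proof (induct xs rule: rev_induct)
  case Nil
  then show ?case by simp
next
  case (snoc i xs)
  have IH: "canon C A k (filter (\<lambda>i. A i \<noteq> unt C) xs) = canon C A k xs" using snoc by (auto simp: inj_on_def)
  have ty: "canon C A k xs \<in> mor C" "cd C (canon C A k xs) = T C A (ord k (set xs))"
    using canon_typ[of xs k A] snoc(2-4) by (auto simp: inj_on_def)
  have fs: "finite {j\<in>set xs. k j < k i}" "finite {j\<in>set xs. k i < k j}" by auto
  have ob: "T C A (ord k {j\<in>set xs. k j < k i}) \<in> obj C" "T C A (ord k {j\<in>set xs. k i < k j}) \<in> obj C"
    using snoc(4) fs by (auto simp: ord_props)
  have ai: "A i \<in> obj C" using snoc by auto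
  show ?case
  proof (cases "A i = unt C")
    case True
    have "T C A (ord k (set xs)) = tns C (T C A (ord k {j\<in>set xs. k j < k i})) (T C A (ord k {j\<in>set xs. k i < k j}))"
      by (rule T_ord_split) (use snoc(2-4) in \<open>auto simp: inj_on_def\<close>)
    then show ?thesis using True IH ty ob by (simp add: canon_snoc)
  next
    case False
    have e1: "{j\<in>set (filter (\<lambda>i. A i \<noteq> unt C) xs). k j < k i} = {j\<in>{j\<in>set xs. k j < k i}. A j \<noteq> unt C}" by auto
    have e2: "{j\<in>set (filter (\<lambda>i. A i \<noteq> unt C) xs). k i < k j} = {j\<in>{j\<in>set xs. k i < k j}. A j \<noteq> unt C}" by auto
    have t1: "T C A (ord k {j\<in>{j\<in>set xs. k j < k i}. A j \<noteq> unt C}) = T C A (ord k {j\<in>set xs. k j < k i})"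
      by (rule T_ord_filter_unt) (use snoc(3,4) in \<open>auto simp: inj_on_def\<close>)
    have t2: "T C A (ord k {j\<in>{j\<in>set xs. k i < k j}. A j \<noteq> unt C}) = T C A (ord k {j\<in>set xs. k i < k j})"
      by (rule T_ord_filter_unt) (use snoc(3,4) in \<open>auto simp: inj_on_def\<close>)
    have f: "filter (\<lambda>i. A i \<noteq> unt C) (xs @ [i]) = filter (\<lambda>i. A i \<noteq> unt C) xs @ [i]" using False by simp
    show ?thesis unfolding f canon_snoc e1 e2 t1 t2 IH ..
  qed
qed

lemma ord_image:
  assumes "finite U" "inj_on g U" "inj_on k (g ` U)"
  shows "ord k (g ` U) = map g (ord (k \<circ> g) U)"
proof (rule ord_char)
  show "finite (g ` U)" "inj_on k (g ` U)" using assms by auto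
  have ik: "inj_on (k \<circ> g) U" using assms comp_inj_on by blast
  show "distinct (map g (ord (k \<circ> g) U))" using assms ord_props[OF assms(1)]
    by (simp add: distinct_map inj_on_subset)
  show "set (map g (ord (k \<circ> g) U)) = g ` U" using ord_props[OF assms(1)] by simp
  show "sorted (map k (map g (ord (k \<circ> g) U)))" using ord_props(3)[OF assms(1), of "k \<circ> g"] by simp
qed

lemma canon_map:
  assumes "distinct xs" "inj_on g (set xs)" "inj_on k (g ` set xs)"
  shows "canon C A k (map g xs) = canon C (A \<circ> g) (k \<circ> g) xs"
  using assms
proof (induct xs rule: rev_induct)
  case Nil
  then show ?case by simp
next
  case (snoc i xs)
  have IH: "canon C A k (map g xs) = canon C (A \<circ> g) (k \<circ> g) xs"
    by (rule snoc(1)) (use snoc(2-4) in \<open>auto simp: inj_on_def\<close>)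
  have e1: "{j\<in>set (map g xs). k j < k (g i)} = g ` {j\<in>set xs. (k \<circ> g) j < (k \<circ> g) i}" by auto
  have e2: "{j\<in>set (map g xs). k (g i) < k j} = g ` {j\<in>set xs. (k \<circ> g) i < (k \<circ> g) j}" by auto
  have o1: "ord k (g ` {j\<in>set xs. (k \<circ> g) j < (k \<circ> g) i}) = map g (ord (k \<circ> g) {j\<in>set xs. (k \<circ> g) j < (k \<circ> g) i})"
    by (rule ord_image) (use snoc(3,4) in \<open>auto simp: inj_on_def\<close>)
  have o2: "ord k (g ` {j\<in>set xs. (k \<circ> g) i < (k \<circ> g) j}) = map g (ord (k \<circ> g) {j\<in>set xs. (k \<circ> g) i < (k \<circ> g) j})"
    by (rule ord_image) (use snoc(3,4) in \<open>auto simp: inj_on_def\<close>)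
  have m: "map g (xs @ [i]) = map g xs @ [g i]" by simp
  show ?case unfolding m canon_snoc e1 e2 o1 o2 IH T_map by (simp only: comp_apply[of A g i])
qed


lemma idm_tns_split: "A\<in>obj C \<Longrightarrow> B\<in>obj C \<Longrightarrow> idm C (tns C A B) = tnsm C (idm C A) (idm C B)"
  by simp

lemma algD:
  assumes o: "X\<in>obj C" "a1\<in>obj C" "Ai\<in>obj C" "Y\<in>obj C"
  shows "cmp C (tnsm C (tnsm C (idm C X) (brd C a1 Ai)) (idm C Y)) (tnsm C (idm C (tns C X a1)) (brd C Y Ai))
       = tnsm C (idm C X) (brd C (tns C a1 Y) Ai)"
proof -
  have "cmp C (tnsm C (tnsm C (idm C X) (brd C a1 Ai)) (idm C Y)) (tnsm C (idm C (tns C X a1)) (brd C Y Ai))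
      = cmp C (tnsm C (idm C X) (tnsm C (brd C a1 Ai) (idm C Y))) (tnsm C (idm C X) (tnsm C (idm C a1) (brd C Y Ai)))"
    using o by (simp add: idm_tns_split del: tnsm_id)
  also have "\<dots> = tnsm C (idm C X) (cmp C (tnsm C (brd C a1 Ai) (idm C Y)) (tnsm C (idm C a1) (brd C Y Ai)))"
    using o by (subst interchange) auto
  also have "\<dots> = tnsm C (idm C X) (brd C (tns C a1 Y) Ai)"
    using o by (simp add: hex2)
  finally show ?thesis .
qed

lemma algC:
  assumes o: "X\<in>obj C" "a2\<in>obj C" "Ai\<in>obj C" "Y\<in>obj C"
  shows "cmp C (tnsm C (tnsm C (idm C X) (brd C Ai a2)) (idm C Y)) (tnsm C (idm C X) (brd C (tns C a2 Y) Ai))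
       = tnsm C (idm C (tns C X a2)) (brd C Y Ai)"
proof -
  have "cmp C (tnsm C (tnsm C (idm C X) (brd C Ai a2)) (idm C Y)) (tnsm C (idm C X) (brd C (tns C a2 Y) Ai))
      = tnsm C (idm C X) (cmp C (tnsm C (brd C Ai a2) (idm C Y)) (cmp C (tnsm C (brd C a2 Ai) (idm C Y)) (tnsm C (idm C a2) (brd C Y Ai))))"
    using o by (simp add: hex2 interchange)
  also have "cmp C (tnsm C (brd C Ai a2) (idm C Y)) (cmp C (tnsm C (brd C a2 Ai) (idm C Y)) (tnsm C (idm C a2) (brd C Y Ai)))
     = cmp C (cmp C (tnsm C (brd C Ai a2) (idm C Y)) (tnsm C (brd C a2 Ai) (idm C Y))) (tnsm C (idm C a2) (brd C Y Ai))"
    using o by (simp add: cmp_assoc)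
  also have "cmp C (tnsm C (brd C Ai a2) (idm C Y)) (tnsm C (brd C a2 Ai) (idm C Y)) = idm C (tns C (tns C a2 Ai) Y)"
    using o by (simp add: interchange brd_sym)
  also have "tnsm C (idm C X) (cmp C (idm C (tns C (tns C a2 Ai) Y)) (tnsm C (idm C a2) (brd C Y Ai)))
     = tnsm C (idm C X) (tnsm C (idm C a2) (brd C Y Ai))"
    using o by simp
  also have "\<dots> = tnsm C (idm C (tns C X a2)) (brd C Y Ai)"
    using o by (simp add: idm_tns_split del: tnsm_id)
  finally show ?thesis .
qed


lemma algA:
  assumes o: "L\<in>obj C" "M\<in>obj C" "Ai\<in>obj C" "a1\<in>obj C" "a2\<in>obj C" "Y\<in>obj C"
    and c: "c \<in> mor C" "cd C c = tns C L (tns C M (tns C a1 (tns C a2 Y)))"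
  shows "cmp C (tnsm C (idm C L) (brd C (tns C M (tns C a2 (tns C a1 Y))) Ai))
           (tnsm C (cmp C (tnsm C (tnsm C (idm C (tns C L M)) (brd C a1 a2)) (idm C Y)) c) (idm C Ai))
       = cmp C (tnsm C (tnsm C (idm C (tns C L (tns C Ai M))) (brd C a1 a2)) (idm C Y))
           (cmp C (tnsm C (idm C L) (brd C (tns C M (tns C a1 (tns C a2 Y))) Ai)) (tnsm C c (idm C Ai)))"
proof -
  define g where "g = tnsm C (tnsm C (idm C M) (brd C a1 a2)) (idm C Y)"
  define Sw where "Sw = tnsm C (tnsm C (idm C (tns C L M)) (brd C a1 a2)) (idm C Y)"
  have g: "g \<in> mor C" "dm C g = tns C M (tns C a1 (tns C a2 Y))" "cd C g = tns C M (tns C a2 (tns C a1 Y))"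
    unfolding g_def using o by auto
  have Sw: "Sw = tnsm C (idm C L) g" unfolding Sw_def g_def using o by (simp add: idm_tns_split del: tnsm_id)
  have Swm: "Sw \<in> mor C" "dm C Sw = tns C L (tns C M (tns C a1 (tns C a2 Y)))"
    unfolding Sw using g o by auto
  have e1: "tnsm C (cmp C Sw c) (idm C Ai) = cmp C (tnsm C Sw (idm C Ai)) (tnsm C c (idm C Ai))"
    using Swm c o by (subst interchange) auto
  have e2: "cmp C (tnsm C (idm C L) (brd C (tns C M (tns C a2 (tns C a1 Y))) Ai)) (tnsm C Sw (idm C Ai))
      = tnsm C (idm C L) (cmp C (brd C (cd C g) Ai) (tnsm C g (idm C Ai)))"
  proof -
    have "tnsm C Sw (idm C Ai) = tnsm C (idm C L) (tnsm C g (idm C Ai))" unfolding Sw using g o by simp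
    then show ?thesis using g o by (simp only:) (subst interchange, auto)
  qed
  have e3: "cmp C (brd C (cd C g) Ai) (tnsm C g (idm C Ai)) = cmp C (tnsm C (idm C Ai) g) (brd C (dm C g) Ai)"
    using brd_nat[of g "idm C Ai"] g o by simp
  have e4: "tnsm C (idm C L) (cmp C (tnsm C (idm C Ai) g) (brd C (dm C g) Ai))
     = cmp C (tnsm C (idm C L) (tnsm C (idm C Ai) g)) (tnsm C (idm C L) (brd C (dm C g) Ai))"
    using g o by (subst interchange) auto
  have e5: "tnsm C (idm C L) (tnsm C (idm C Ai) g) = tnsm C (tnsm C (idm C (tns C L (tns C Ai M))) (brd C a1 a2)) (idm C Y)"
    unfolding g_def using o by (simp add: idm_tns_split del: tnsm_id)
  have "cmp C (tnsm C (idm C L) (brd C (tns C M (tns C a2 (tns C a1 Y))) Ai)) (tnsm C (cmp C Sw c) (idm C Ai))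
      = cmp C (cmp C (tnsm C (idm C L) (brd C (tns C M (tns C a2 (tns C a1 Y))) Ai)) (tnsm C Sw (idm C Ai))) (tnsm C c (idm C Ai))"
    unfolding e1 using Swm c o g by (subst cmp_assoc) (auto simp: Sw)
  also have "\<dots> = cmp C (cmp C (tnsm C (idm C L) (tnsm C (idm C Ai) g)) (tnsm C (idm C L) (brd C (dm C g) Ai))) (tnsm C c (idm C Ai))"
    unfolding e2 e3 e4 ..
  also have "\<dots> = cmp C (tnsm C (idm C L) (tnsm C (idm C Ai) g)) (cmp C (tnsm C (idm C L) (brd C (dm C g) Ai)) (tnsm C c (idm C Ai)))"
    using g o c by (subst cmp_assoc) auto
  finally show ?thesis unfolding e5 Sw_def g(2) .
qed

lemma algB:
  assumes o: "X\<in>obj C" "a1\<in>obj C" "a2\<in>obj C" "M\<in>obj C" "R\<in>obj C" "Ai\<in>obj C"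
    and c: "c \<in> mor C" "cd C c = tns C X (tns C a1 (tns C a2 (tns C M R)))"
  shows "cmp C (tnsm C (idm C (tns C X (tns C a2 (tns C a1 M)))) (brd C R Ai))
           (tnsm C (cmp C (tnsm C (tnsm C (idm C X) (brd C a1 a2)) (idm C (tns C M R))) c) (idm C Ai))
       = cmp C (tnsm C (tnsm C (idm C X) (brd C a1 a2)) (idm C (tns C M (tns C Ai R))))
           (cmp C (tnsm C (idm C (tns C X (tns C a1 (tns C a2 M)))) (brd C R Ai)) (tnsm C c (idm C Ai)))"
proof -
  define h where "h = tnsm C (tnsm C (idm C X) (brd C a1 a2)) (idm C M)"
  define Sw where "Sw = tnsm C (tnsm C (idm C X) (brd C a1 a2)) (idm C (tns C M R))"
  have h: "h \<in> mor C" "dm C h = tns C X (tns C a1 (tns C a2 M))" "cd C h = tns C X (tns C a2 (tns C a1 M))"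
    unfolding h_def using o by auto
  have Swm: "Sw \<in> mor C" "dm C Sw = tns C X (tns C a1 (tns C a2 (tns C M R)))"
     "cd C Sw = tns C X (tns C a2 (tns C a1 (tns C M R)))"
    unfolding Sw_def using o by auto
  have e1: "tnsm C (cmp C Sw c) (idm C Ai) = cmp C (tnsm C Sw (idm C Ai)) (tnsm C c (idm C Ai))"
    using Swm c o by (subst interchange) auto
  have s1: "tnsm C Sw (idm C Ai) = tnsm C h (idm C (tns C R Ai))"
    unfolding Sw_def h_def using o by (simp add: idm_tns_split del: tnsm_id)
  have e2: "cmp C (tnsm C (idm C (tns C X (tns C a2 (tns C a1 M)))) (brd C R Ai)) (tnsm C h (idm C (tns C R Ai)))
     = tnsm C h (brd C R Ai)"
    using h o by (subst interchange) auto
  have e3: "tnsm C h (brd C R Ai) = cmp C (tnsm C h (idm C (tns C Ai R))) (tnsm C (idm C (tns C X (tns C a1 (tns C a2 M)))) (brd C R Ai))"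
    using h o by (subst interchange) auto
  have e4: "tnsm C h (idm C (tns C Ai R)) = tnsm C (tnsm C (idm C X) (brd C a1 a2)) (idm C (tns C M (tns C Ai R)))"
    unfolding h_def using o by (simp add: idm_tns_split del: tnsm_id)
  have "cmp C (tnsm C (idm C (tns C X (tns C a2 (tns C a1 M)))) (brd C R Ai)) (tnsm C (cmp C Sw c) (idm C Ai))
      = cmp C (cmp C (tnsm C (idm C (tns C X (tns C a2 (tns C a1 M)))) (brd C R Ai)) (tnsm C Sw (idm C Ai))) (tnsm C c (idm C Ai))"
    unfolding e1 using Swm c o by (subst cmp_assoc) auto
  also have "\<dots> = cmp C (cmp C (tnsm C h (idm C (tns C Ai R))) (tnsm C (idm C (tns C X (tns C a1 (tns C a2 M)))) (brd C R Ai))) (tnsm C c (idm C Ai))"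
    unfolding s1 e2 e3 ..
  also have "\<dots> = cmp C (tnsm C h (idm C (tns C Ai R))) (cmp C (tnsm C (idm C (tns C X (tns C a1 (tns C a2 M)))) (brd C R Ai)) (tnsm C c (idm C Ai)))"
    using h o c by (subst cmp_assoc) auto
  finally show ?thesis unfolding e4 Sw_def .
qed


lemma T_ord_union:
  assumes "finite U1" "finite U2" "inj_on k (U1 \<union> U2)" "\<And>a b. a\<in>U1 \<Longrightarrow> b\<in>U2 \<Longrightarrow> k a < k b"
    "\<And>q. q\<in>U1 \<union> U2 \<Longrightarrow> A q \<in> obj C"
  shows "T C A (ord k (U1 \<union> U2)) = tns C (T C A (ord k U1)) (T C A (ord k U2))"
proof -
  have "ord k (U1 \<union> U2) = ord k U1 @ ord k U2"
  proof (rule ord_char)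
    show "finite (U1 \<union> U2)" "inj_on k (U1 \<union> U2)" using assms by auto
    show "distinct (ord k U1 @ ord k U2)" using assms(1,2,4) by (auto simp: ord_props)
    show "set (ord k U1 @ ord k U2) = U1 \<union> U2" using assms(1,2) by (auto simp: ord_props)
    show "sorted (map k (ord k U1 @ ord k U2))"
      unfolding map_append sorted_append using assms(1,2,4) ord_props[OF assms(1)] ord_props[OF assms(2)]
      by (auto intro: less_imp_le)
  qed
  then show ?thesis using assms by (simp only:) (subst T_append, auto simp: ord_props)
qed

lemma TU2:
  assumes W: "finite W" "inj_on k W" "\<And>q. q\<in>W \<Longrightarrow> A q \<in> obj C"
    and "U1 \<subseteq> W" "U2 \<subseteq> W" "\<And>a b. a\<in>U1 \<Longrightarrow> b\<in>U2 \<Longrightarrow> k a < k b"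
  shows "T C A (ord k (U1 \<union> U2)) = tns C (T C A (ord k U1)) (T C A (ord k U2))"
  by (rule T_ord_union) (use assms in \<open>auto intro: finite_subset inj_on_subset\<close>)

lemma TU3:
  assumes W: "finite W" "inj_on k W" "\<And>q. q\<in>W \<Longrightarrow> A q \<in> obj C"
    and "U1 \<subseteq> W" "U2 \<subseteq> W" "U3 \<subseteq> W"
    "\<And>a b. a\<in>U1 \<Longrightarrow> b\<in>U2 \<Longrightarrow> k a < k b" "\<And>a b. a\<in>U1 \<Longrightarrow> b\<in>U3 \<Longrightarrow> k a < k b"
    "\<And>a b. a\<in>U2 \<Longrightarrow> b\<in>U3 \<Longrightarrow> k a < k b"
  shows "T C A (ord k (U1 \<union> (U2 \<union> U3))) = tns C (T C A (ord k U1)) (tns C (T C A (ord k U2)) (T C A (ord k U3)))"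
proof -
  have "T C A (ord k (U1 \<union> (U2 \<union> U3))) = tns C (T C A (ord k U1)) (T C A (ord k (U2 \<union> U3)))"
    by (rule TU2[OF W]) (use assms in auto)
  also have "T C A (ord k (U2 \<union> U3)) = tns C (T C A (ord k U2)) (T C A (ord k U3))"
    by (rule TU2[OF W]) (use assms in auto)
  finally show ?thesis .
qed

lemma TU4:
  assumes W: "finite W" "inj_on k W" "\<And>q. q\<in>W \<Longrightarrow> A q \<in> obj C"
    and "U1 \<subseteq> W" "U2 \<subseteq> W" "U3 \<subseteq> W" "U4 \<subseteq> W"
    "\<And>a b. a\<in>U1 \<Longrightarrow> b\<in>U2 \<Longrightarrow> k a < k b" "\<And>a b. a\<in>U1 \<Longrightarrow> b\<in>U3 \<Longrightarrow> k a < k b"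
    "\<And>a b. a\<in>U1 \<Longrightarrow> b\<in>U4 \<Longrightarrow> k a < k b"
    "\<And>a b. a\<in>U2 \<Longrightarrow> b\<in>U3 \<Longrightarrow> k a < k b" "\<And>a b. a\<in>U2 \<Longrightarrow> b\<in>U4 \<Longrightarrow> k a < k b"
    "\<And>a b. a\<in>U3 \<Longrightarrow> b\<in>U4 \<Longrightarrow> k a < k b"
  shows "T C A (ord k (U1 \<union> (U2 \<union> (U3 \<union> U4)))) =
    tns C (T C A (ord k U1)) (tns C (T C A (ord k U2)) (tns C (T C A (ord k U3)) (T C A (ord k U4))))"
proof -
  have "T C A (ord k (U1 \<union> (U2 \<union> (U3 \<union> U4)))) = tns C (T C A (ord k U1)) (T C A (ord k (U2 \<union> (U3 \<union> U4))))"
    by (rule TU2[OF W]) (use assms in auto)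
  also have "T C A (ord k (U2 \<union> (U3 \<union> U4))) = tns C (T C A (ord k U2)) (tns C (T C A (ord k U3)) (T C A (ord k U4)))"
    by (rule TU3[OF W]) (use assms in auto)
  finally show ?thesis .
qed

lemma TU5:
  assumes W: "finite W" "inj_on k W" "\<And>q. q\<in>W \<Longrightarrow> A q \<in> obj C"
    and "U1 \<subseteq> W" "U2 \<subseteq> W" "U3 \<subseteq> W" "U4 \<subseteq> W" "U5 \<subseteq> W"
    "\<And>a b. a\<in>U1 \<Longrightarrow> b\<in>U2 \<Longrightarrow> k a < k b" "\<And>a b. a\<in>U1 \<Longrightarrow> b\<in>U3 \<Longrightarrow> k a < k b"
    "\<And>a b. a\<in>U1 \<Longrightarrow> b\<in>U4 \<Longrightarrow> k a < k b" "\<And>a b. a\<in>U1 \<Longrightarrow> b\<in>U5 \<Longrightarrow> k a < k b"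
    "\<And>a b. a\<in>U2 \<Longrightarrow> b\<in>U3 \<Longrightarrow> k a < k b" "\<And>a b. a\<in>U2 \<Longrightarrow> b\<in>U4 \<Longrightarrow> k a < k b"
    "\<And>a b. a\<in>U2 \<Longrightarrow> b\<in>U5 \<Longrightarrow> k a < k b"
    "\<And>a b. a\<in>U3 \<Longrightarrow> b\<in>U4 \<Longrightarrow> k a < k b" "\<And>a b. a\<in>U3 \<Longrightarrow> b\<in>U5 \<Longrightarrow> k a < k b"
    "\<And>a b. a\<in>U4 \<Longrightarrow> b\<in>U5 \<Longrightarrow> k a < k b"
  shows "T C A (ord k (U1 \<union> (U2 \<union> (U3 \<union> (U4 \<union> U5))))) =
    tns C (T C A (ord k U1)) (tns C (T C A (ord k U2)) (tns C (T C A (ord k U3)) (tns C (T C A (ord k U4)) (T C A (ord k U5)))))"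
proof -
  have "T C A (ord k (U1 \<union> (U2 \<union> (U3 \<union> (U4 \<union> U5))))) = tns C (T C A (ord k U1)) (T C A (ord k (U2 \<union> (U3 \<union> (U4 \<union> U5)))))"
    by (rule TU2[OF W]) (use assms in auto)
  also have "T C A (ord k (U2 \<union> (U3 \<union> (U4 \<union> U5)))) = tns C (T C A (ord k U2)) (tns C (T C A (ord k U3)) (tns C (T C A (ord k U4)) (T C A (ord k U5))))"
    by (rule TU4[OF W]) (use assms in auto)
  finally show ?thesis .
qed

lemma T_ord_single: "A a \<in> obj C \<Longrightarrow> T C A (ord k {a}) = A a" by simp

lemma adj_simps: "adj j j = Suc j" "adj j (Suc j) = j" "v \<noteq> j \<Longrightarrow> v \<noteq> Suc j \<Longrightarrow> adj j v = v"
  by (auto simp: adj_def)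

lemma adj_adj[simp]: "adj j (adj j v) = v" by (auto simp: adj_def)

lemma inj_adj: "inj (adj j)" by (metis adj_adj injI)

lemma canon_adj:
  assumes "distinct xs" "inj_on k (set xs)" "\<And>i. i \<in> set xs \<Longrightarrow> A i \<in> obj C"
    "a1 \<in> set xs" "k a1 = j" "a2 \<in> set xs" "k a2 = Suc j"
  shows "canon C A (adj j \<circ> k) xs = cmp C (tnsm C (tnsm C (idm C (T C A (ord k {q\<in>set xs. k q < j})))
      (brd C (A a1) (A a2))) (idm C (T C A (ord k {q\<in>set xs. Suc j < k q})))) (canon C A k xs)"
  using assms
proof (induct xs arbitrary: a1 a2 rule: rev_induct)
  case Nil
  then show ?case by simp
next
  case (snoc i xs)
  let ?k' = "adj j \<circ> k"
  let ?S = "set xs"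
  have iS: "i \<notin> ?S" using snoc by auto
  have dxs: "distinct xs" using snoc by auto
  have inj': "inj_on k (insert i ?S)" using snoc by auto
  have injS: "inj_on k ?S" using snoc by (auto simp: inj_on_def)
  have ob: "\<And>q. q \<in> insert i ?S \<Longrightarrow> A q \<in> obj C" using snoc by auto
  have ki: "\<And>q. q \<in> ?S \<Longrightarrow> k q \<noteq> k i" using inj' iS by (auto simp: inj_on_def)
  have kinj: "\<And>p q. p \<in> insert i ?S \<Longrightarrow> q \<in> insert i ?S \<Longrightarrow> k p = k q \<Longrightarrow> p = q" using inj' by (auto simp: inj_on_def)
  have ty: "canon C A k xs \<in> mor C" "cd C (canon C A k xs) = T C A (ord k ?S)"
    using canon_typ[OF dxs injS] ob by auto
  have fin: "\<And>P. finite {q\<in>?S. P q}" by auto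
  have finS: "finite (insert i ?S)" by simp
  have obT: "\<And>U. U \<subseteq> insert i ?S \<Longrightarrow> T C A (ord k U) \<in> obj C"
    using ob by (intro T_obj) (auto simp: ord_props finite_subset)
  have a12: "a1 \<in> insert i ?S" "a2 \<in> insert i ?S" using snoc by auto
  have cls: "\<And>x. x \<in> insert i ?S \<Longrightarrow> x = a1 \<or> x = a2 \<or> k x < j \<or> Suc j < k x"
  proof -
    fix x assume x: "x \<in> insert i ?S"
    show "x = a1 \<or> x = a2 \<or> k x < j \<or> Suc j < k x"
      using kinj[OF x a12(1)] kinj[OF x a12(2)] snoc(6,8) by linarith
  qed
  have inj'': "inj_on ?k' (insert i ?S)" using inj' inj_adj by (auto simp: inj_on_def)
  have U: "\<And>U1 U2. U1 \<subseteq> insert i ?S \<Longrightarrow> U2 \<subseteq> insert i ?S \<Longrightarrow> (\<And>a b. a\<in>U1 \<Longrightarrow> b\<in>U2 \<Longrightarrow> k a < k b) \<Longrightarrow>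
     T C A (ord k (U1 \<union> U2)) = tns C (T C A (ord k U1)) (T C A (ord k U2))"
    by (rule T_ord_union) (auto intro: finite_subset inj_on_subset[OF inj'] ob)
  have U': "\<And>U1 U2. U1 \<subseteq> insert i ?S \<Longrightarrow> U2 \<subseteq> insert i ?S \<Longrightarrow> (\<And>a b. a\<in>U1 \<Longrightarrow> b\<in>U2 \<Longrightarrow> ?k' a < ?k' b) \<Longrightarrow>
     T C A (ord ?k' (U1 \<union> U2)) = tns C (T C A (ord ?k' U1)) (T C A (ord ?k' U2))"
    by (rule T_ord_union) (auto intro: finite_subset inj_on_subset[OF inj''] ob)
  have OC: "\<And>U. U \<subseteq> insert i ?S \<Longrightarrow> (\<And>q. q \<in> U \<Longrightarrow> k q \<noteq> j \<and> k q \<noteq> Suc j) \<Longrightarrow> ord ?k' U = ord k U"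
  proof -
    fix U assume U: "U \<subseteq> insert i ?S" "\<And>q. q \<in> U \<Longrightarrow> k q \<noteq> j \<and> k q \<noteq> Suc j"
    show "ord ?k' U = ord k U"
      by (rule ord_cong) (use U inj_on_subset[OF inj'] finite_subset[OF U(1)] in \<open>auto simp: adj_simps\<close>)
  qed
  show ?case
  proof (cases "k i < j")
    case True
    have a1S: "a1 \<in> ?S" and a2S: "a2 \<in> ?S" using snoc True by auto
    have IH: "canon C A ?k' xs = cmp C (tnsm C (tnsm C (idm C (T C A (ord k {q\<in>?S. k q < j})))
      (brd C (A a1) (A a2))) (idm C (T C A (ord k {q\<in>?S. Suc j < k q})))) (canon C A k xs)"
      by (rule snoc(1)[OF dxs injS _ a1S _ a2S]) (use snoc(6,8) ob in auto)
    define SL where "SL = {q\<in>?S. k q < k i}"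
    define SM where "SM = {q\<in>?S. k i < k q \<and> k q < j}"
    define SY where "SY = {q\<in>?S. Suc j < k q}"
    have SLs: "SL \<subseteq> insert i ?S" "SM \<subseteq> insert i ?S" "SY \<subseteq> insert i ?S" unfolding SL_def SM_def SY_def by auto
    have e_S: "?S = SL \<union> (SM \<union> ({a1} \<union> ({a2} \<union> SY)))"
      unfolding SL_def SM_def SY_def using a1S a2S snoc(6,8) ki cls
      by auto (meson insertI2 linorder_neqE_nat)
    have kk: "?k' i = k i" using True by (simp add: adj_simps)
    have obs: "T C A (ord k SL) \<in> obj C" "T C A (ord k SM) \<in> obj C" "T C A (ord k SY) \<in> obj C"
      "A i \<in> obj C" "A a1 \<in> obj C" "A a2 \<in> obj C" using obT SLs ob a1S a2S by auto
    have c1: "T C A (ord k ?S) = tns C (T C A (ord k SL)) (tns C (T C A (ord k SM)) (tns C (A a1) (tns C (A a2) (T C A (ord k SY)))))"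
    proof -
      have "T C A (ord k (SL \<union> (SM \<union> ({a1} \<union> ({a2} \<union> SY))))) = tns C (T C A (ord k SL)) (tns C (T C A (ord k SM)) (tns C (T C A (ord k {a1})) (tns C (T C A (ord k {a2})) (T C A (ord k SY)))))"
        by (rule TU5[OF finS inj' ob]) (use a1S a2S snoc(6,8) True in \<open>auto simp: SL_def SM_def SY_def\<close>)
      then show ?thesis unfolding e_S[symmetric] using obs by (simp only: ord_single T_single)
    qed
    have c2: "T C A (ord k {q\<in>?S. k q < j}) = tns C (T C A (ord k SL)) (T C A (ord k SM))"
    proof -
      have "{q\<in>?S. k q < j} = SL \<union> SM" unfolding SL_def SM_def using ki True by (auto simp: nat_neq_iff)
      then show ?thesis by (simp only:) (rule TU2[OF finS inj' ob], auto simp: SL_def SM_def)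
    qed
    have c3: "{q\<in>insert i ?S. Suc j < k q} = SY" unfolding SY_def using True by auto
    have c4: "T C A (ord k {q\<in>insert i ?S. k q < j}) = tns C (T C A (ord k SL)) (tns C (A i) (T C A (ord k SM)))"
    proof -
      have "{q\<in>insert i ?S. k q < j} = SL \<union> ({i} \<union> SM)" unfolding SL_def SM_def using ki True
        by auto (meson less_trans linorder_neqE_nat)
      moreover have "T C A (ord k (SL \<union> ({i} \<union> SM))) = tns C (T C A (ord k SL)) (tns C (T C A (ord k {i})) (T C A (ord k SM)))"
        by (rule TU3[OF finS inj' ob]) (use True in \<open>auto simp: SL_def SM_def\<close>)
      ultimately show ?thesis using obs by (simp only: ord_single T_single)
    qed
    have c5: "T C A (ord k {q\<in>?S. k i < k q}) = tns C (T C A (ord k SM)) (tns C (A a1) (tns C (A a2) (T C A (ord k SY))))"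
    proof -
      have "{q\<in>?S. k i < k q} = SM \<union> ({a1} \<union> ({a2} \<union> SY))" unfolding SM_def SY_def using ki True a1S a2S snoc(6,8) cls
        by auto
      moreover have "T C A (ord k (SM \<union> ({a1} \<union> ({a2} \<union> SY)))) = tns C (T C A (ord k SM)) (tns C (T C A (ord k {a1})) (tns C (T C A (ord k {a2})) (T C A (ord k SY))))"
        by (rule TU4[OF finS inj' ob]) (use a1S a2S snoc(6,8) True in \<open>auto simp: SM_def SY_def\<close>)
      ultimately show ?thesis using obs by (simp only: ord_single T_single)
    qed
    have c6: "{q\<in>?S. ?k' q < ?k' i} = SL"
      unfolding kk SL_def using cls True snoc(6,8) a1S a2S by (auto simp: adj_def)
    have c7: "ord ?k' SL = ord k SL" by (rule OC) (use SLs True in \<open>auto simp: SL_def\<close>)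
    have c8: "T C A (ord ?k' {q\<in>?S. ?k' i < ?k' q}) = tns C (T C A (ord k SM)) (tns C (A a2) (tns C (A a1) (T C A (ord k SY))))"
    proof -
      have "{q\<in>?S. ?k' i < ?k' q} = SM \<union> ({a2} \<union> ({a1} \<union> SY))" unfolding kk SM_def SY_def using ki True a1S a2S snoc(6,8) cls
        by (auto simp: adj_def)
      moreover have "ord ?k' SM = ord k SM" by (rule OC) (use SLs True in \<open>auto simp: SM_def\<close>)
      moreover have "ord ?k' SY = ord k SY" by (rule OC) (use SLs True in \<open>auto simp: SY_def\<close>)
      moreover have "T C A (ord ?k' (SM \<union> ({a2} \<union> ({a1} \<union> SY)))) = tns C (T C A (ord ?k' SM)) (tns C (T C A (ord ?k' {a2})) (tns C (T C A (ord ?k' {a1})) (T C A (ord ?k' SY))))"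
        by (rule TU4[OF finS inj'' ob]) (use a1S a2S snoc(6,8) True in \<open>auto simp: SM_def SY_def adj_simps\<close>)
      ultimately show ?thesis using obs by (simp only: ord_single T_single)
    qed
    have sx: "set (xs @ [i]) = insert i ?S" by simp
    show ?thesis
      unfolding canon_snoc IH c6 c7 c8 sx c3 c4 c2 c5 SL_def[symmetric] SY_def[symmetric]
      by (rule algA[OF obs(1,2,4,5,6,3) ty(1)]) (simp add: ty(2) c1)
  next
    case False
    note nlt = False
    show ?thesis
    proof (cases "Suc j < k i")
      case True
      have a1S: "a1 \<in> ?S" and a2S: "a2 \<in> ?S" using snoc True by auto
      have IH: "canon C A ?k' xs = cmp C (tnsm C (tnsm C (idm C (T C A (ord k {q\<in>?S. k q < j})))
        (brd C (A a1) (A a2))) (idm C (T C A (ord k {q\<in>?S. Suc j < k q})))) (canon C A k xs)"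
        by (rule snoc(1)[OF dxs injS _ a1S _ a2S]) (use snoc(6,8) ob in auto)
      define SX where "SX = {q\<in>?S. k q < j}"
      define SM where "SM = {q\<in>?S. Suc j < k q \<and> k q < k i}"
      define SR where "SR = {q\<in>?S. k i < k q}"
      have SLs: "SX \<subseteq> insert i ?S" "SM \<subseteq> insert i ?S" "SR \<subseteq> insert i ?S" unfolding SX_def SM_def SR_def by auto
      have kk: "?k' i = k i" using True by (simp add: adj_simps)
      have obs: "T C A (ord k SX) \<in> obj C" "T C A (ord k SM) \<in> obj C" "T C A (ord k SR) \<in> obj C"
        "A i \<in> obj C" "A a1 \<in> obj C" "A a2 \<in> obj C" using obT SLs ob a1S a2S by auto
      have c1: "T C A (ord k ?S) = tns C (T C A (ord k SX)) (tns C (A a1) (tns C (A a2) (tns C (T C A (ord k SM)) (T C A (ord k SR)))))"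
      proof -
        have "?S = SX \<union> ({a1} \<union> ({a2} \<union> (SM \<union> SR)))"
          unfolding SX_def SM_def SR_def using a1S a2S snoc(6,8) ki cls True by (auto simp: nat_neq_iff)
        moreover have "T C A (ord k (SX \<union> ({a1} \<union> ({a2} \<union> (SM \<union> SR))))) = tns C (T C A (ord k SX)) (tns C (T C A (ord k {a1})) (tns C (T C A (ord k {a2})) (tns C (T C A (ord k SM)) (T C A (ord k SR)))))"
          by (rule TU5[OF finS inj' ob]) (use a1S a2S snoc(6,8) True in \<open>auto simp: SX_def SM_def SR_def\<close>)
        ultimately show ?thesis using obs by (simp only: ord_single T_single)
      qed
      have c2: "T C A (ord k {q\<in>?S. Suc j < k q}) = tns C (T C A (ord k SM)) (T C A (ord k SR))"
      proof -
        have "{q\<in>?S. Suc j < k q} = SM \<union> SR" unfolding SM_def SR_def using ki True by (auto simp: nat_neq_iff)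
        then show ?thesis by (simp only:) (rule TU2[OF finS inj' ob], auto simp: SM_def SR_def)
      qed
      have c3: "{q\<in>insert i ?S. k q < j} = SX" unfolding SX_def using True by auto
      have c4: "T C A (ord k {q\<in>insert i ?S. Suc j < k q}) = tns C (T C A (ord k SM)) (tns C (A i) (T C A (ord k SR)))"
      proof -
        have "{q\<in>insert i ?S. Suc j < k q} = SM \<union> ({i} \<union> SR)" unfolding SM_def SR_def using ki True
          by (auto simp: nat_neq_iff)
        moreover have "T C A (ord k (SM \<union> ({i} \<union> SR))) = tns C (T C A (ord k SM)) (tns C (T C A (ord k {i})) (T C A (ord k SR)))"
          by (rule TU3[OF finS inj' ob]) (use True in \<open>auto simp: SM_def SR_def\<close>)
        ultimately show ?thesis using obs by (simp only: ord_single T_single)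
      qed
      have c5: "T C A (ord k {q\<in>?S. k q < k i}) = tns C (T C A (ord k SX)) (tns C (A a1) (tns C (A a2) (T C A (ord k SM))))"
      proof -
        have "{q\<in>?S. k q < k i} = SX \<union> ({a1} \<union> ({a2} \<union> SM))" unfolding SX_def SM_def using ki True a1S a2S snoc(6,8) cls
          by auto
        moreover have "T C A (ord k (SX \<union> ({a1} \<union> ({a2} \<union> SM)))) = tns C (T C A (ord k SX)) (tns C (T C A (ord k {a1})) (tns C (T C A (ord k {a2})) (T C A (ord k SM))))"
          by (rule TU4[OF finS inj' ob]) (use a1S a2S snoc(6,8) True in \<open>auto simp: SX_def SM_def\<close>)
        ultimately show ?thesis using obs by (simp only: ord_single T_single)
      qed
      have c6: "T C A (ord ?k' {q\<in>?S. ?k' q < ?k' i}) = tns C (T C A (ord k SX)) (tns C (A a2) (tns C (A a1) (T C A (ord k SM))))"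
      proof -
        have "{q\<in>?S. ?k' q < ?k' i} = SX \<union> ({a2} \<union> ({a1} \<union> SM))" unfolding kk SX_def SM_def using ki True a1S a2S snoc(6,8) cls
          by (auto simp: adj_def)
        moreover have "ord ?k' SX = ord k SX" by (rule OC) (use SLs True in \<open>auto simp: SX_def\<close>)
        moreover have "ord ?k' SM = ord k SM" by (rule OC) (use SLs True in \<open>auto simp: SM_def\<close>)
        moreover have "T C A (ord ?k' (SX \<union> ({a2} \<union> ({a1} \<union> SM)))) = tns C (T C A (ord ?k' SX)) (tns C (T C A (ord ?k' {a2})) (tns C (T C A (ord ?k' {a1})) (T C A (ord ?k' SM))))"
          by (rule TU4[OF finS inj'' ob]) (use a1S a2S snoc(6,8) True in \<open>auto simp: SX_def SM_def adj_simps\<close>)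
        ultimately show ?thesis using obs by (simp only: ord_single T_single)
      qed
      have c7: "{q\<in>?S. ?k' i < ?k' q} = SR"
        unfolding kk SR_def using cls True snoc(6,8) a1S a2S by (auto simp: adj_def)
      have c8: "ord ?k' SR = ord k SR" by (rule OC) (use SLs True in \<open>auto simp: SR_def\<close>)
      have sx: "set (xs @ [i]) = insert i ?S" by simp
      show ?thesis
        unfolding canon_snoc IH c6 c7 c8 sx c3 c4 c2 c5 SX_def[symmetric] SR_def[symmetric]
        by (rule algB[OF obs(1,5,6,2,3,4) ty(1)]) (simp add: ty(2) c1)
    next
      case False
      note ngt = False
      define SX where "SX = {q\<in>?S. k q < j}"
      define SY where "SY = {q\<in>?S. Suc j < k q}"
      have SLs: "SX \<subseteq> insert i ?S" "SY \<subseteq> insert i ?S" unfolding SX_def SY_def by auto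
      have sx: "set (xs @ [i]) = insert i ?S" by simp
      have obs0: "T C A (ord k SX) \<in> obj C" "T C A (ord k SY) \<in> obj C" "A i \<in> obj C"
        using obT SLs ob by auto
      have t1: "{q\<in>insert i ?S. k q < j} = SX" unfolding SX_def using nlt by auto
      have t2: "{q\<in>insert i ?S. Suc j < k q} = SY" unfolding SY_def using ngt by auto
      show ?thesis
      proof (cases "k i = j")
        case True
        have ia: "i = a1" using kinj[OF _ a12(1)] True snoc(6) by auto
        have a2S: "a2 \<in> ?S" using snoc(7,8) True by auto
        have clsC: "\<And>x. x \<in> ?S \<Longrightarrow> x = a2 \<or> k x < j \<or> Suc j < k x" using cls ia iS by (metis insertI2)
        have obs: "A a2 \<in> obj C" using ob a2S by auto
        have cc: "canon C A ?k' xs = canon C A k xs"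
        proof (rule canon_cong[OF dxs injS])
          fix a b assume ab: "a \<in> ?S" "b \<in> ?S"
          then have "k a \<noteq> k i" "k b \<noteq> k i" using ki by auto
          then show "k a < k b \<longleftrightarrow> ?k' a < ?k' b" using True by (auto simp: adj_def dest: clsC)
        qed
        have kk: "?k' i = Suc j" using True by (simp add: adj_simps)
        have c1: "T C A (ord k ?S) = tns C (T C A (ord k SX)) (tns C (A a2) (T C A (ord k SY)))"
        proof -
          have "?S = SX \<union> ({a2} \<union> SY)"
            unfolding SX_def SY_def using a2S snoc(6,8) ki True by (auto simp: nat_neq_iff dest: clsC)
          moreover have "T C A (ord k (SX \<union> ({a2} \<union> SY))) = tns C (T C A (ord k SX)) (tns C (T C A (ord k {a2})) (T C A (ord k SY)))"
            by (rule TU3[OF finS inj' ob]) (use a2S snoc(6,8) True in \<open>auto simp: SX_def SY_def\<close>)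
          ultimately show ?thesis using obs by (simp only: ord_single T_single)
        qed
        have c2: "T C A (ord ?k' {q\<in>?S. ?k' q < ?k' i}) = tns C (T C A (ord k SX)) (A a2)"
        proof -
          have "{q\<in>?S. ?k' q < ?k' i} = SX \<union> {a2}" unfolding kk SX_def using ki True a2S snoc(6,8)
            by (auto simp: adj_def dest: clsC)
          moreover have "ord ?k' SX = ord k SX" by (rule OC) (use SLs True in \<open>auto simp: SX_def\<close>)
          moreover have "T C A (ord ?k' (SX \<union> {a2})) = tns C (T C A (ord ?k' SX)) (T C A (ord ?k' {a2}))"
            by (rule TU2[OF finS inj'' ob]) (use a2S snoc(6,8) True in \<open>auto simp: SX_def adj_simps\<close>)
          ultimately show ?thesis using obs by (simp only: ord_single T_single)
        qed
        have c3: "{q\<in>?S. ?k' i < ?k' q} = SY"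
          unfolding kk SY_def using True snoc(6,8) a2S ki by (auto simp: adj_def dest: clsC)
        have c4: "ord ?k' SY = ord k SY" by (rule OC) (use SLs True in \<open>auto simp: SY_def\<close>)
        have c5: "{q\<in>?S. k q < k i} = SX" unfolding SX_def True ..
        have c6: "T C A (ord k {q\<in>?S. k i < k q}) = tns C (A a2) (T C A (ord k SY))"
        proof -
          have "{q\<in>?S. k i < k q} = {a2} \<union> SY" unfolding SY_def using ki True a2S snoc(6,8)
            by (auto simp: nat_neq_iff dest: clsC)
          moreover have "T C A (ord k ({a2} \<union> SY)) = tns C (T C A (ord k {a2})) (T C A (ord k SY))"
            by (rule TU2[OF finS inj' ob]) (use a2S snoc(6,8) True in \<open>auto simp: SY_def\<close>)
          ultimately show ?thesis using obs by (simp only: ord_single T_single)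
        qed
        have Q: "tnsm C (idm C (T C A (ord k SX))) (brd C (tns C (A a2) (T C A (ord k SY))) (A i)) \<in> mor C"
          "dm C (tnsm C (idm C (T C A (ord k SX))) (brd C (tns C (A a2) (T C A (ord k SY))) (A i)))
            = cd C (tnsm C (canon C A k xs) (idm C (A i)))"
          using obs obs0 ty c1 by auto
        show ?thesis
          unfolding canon_snoc cc c2 c3 c4 sx t1 t2 c5 c6 ia[symmetric]
          using algC[OF obs0(1) obs obs0(3) obs0(2)] Q obs obs0 ty
          by (subst cmp_assoc[symmetric]) auto
      next
        case False
        then have True: "k i = Suc j" using nlt ngt by auto
        have ia: "i = a2" using kinj[OF _ a12(2)] True snoc(8) by auto
        have a1S: "a1 \<in> ?S" using snoc(5,6) True by auto
        have clsD: "\<And>x. x \<in> ?S \<Longrightarrow> x = a1 \<or> k x < j \<or> Suc j < k x" using cls ia iS by (metis insertI2)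
        have obs: "A a1 \<in> obj C" using ob a1S by auto
        have cc: "canon C A ?k' xs = canon C A k xs"
        proof (rule canon_cong[OF dxs injS])
          fix a b assume ab: "a \<in> ?S" "b \<in> ?S"
          then have "k a \<noteq> k i" "k b \<noteq> k i" using ki by auto
          then show "k a < k b \<longleftrightarrow> ?k' a < ?k' b" using True by (auto simp: adj_def dest: clsD)
        qed
        have kk: "?k' i = j" using True by (simp add: adj_simps)
        have c1: "T C A (ord k ?S) = tns C (T C A (ord k SX)) (tns C (A a1) (T C A (ord k SY)))"
        proof -
          have "?S = SX \<union> ({a1} \<union> SY)"
            unfolding SX_def SY_def using a1S snoc(6,8) ki True by (auto simp: nat_neq_iff dest: clsD)
          moreover have "T C A (ord k (SX \<union> ({a1} \<union> SY))) = tns C (T C A (ord k SX)) (tns C (T C A (ord k {a1})) (T C A (ord k SY)))"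
            by (rule TU3[OF finS inj' ob]) (use a1S snoc(6,8) True in \<open>auto simp: SX_def SY_def\<close>)
          ultimately show ?thesis using obs by (simp only: ord_single T_single)
        qed
        have c2: "{q\<in>?S. ?k' q < ?k' i} = SX"
          unfolding kk SX_def using True snoc(6,8) a1S ki by (auto simp: adj_def dest: clsD)
        have c3: "ord ?k' SX = ord k SX" by (rule OC) (use SLs True in \<open>auto simp: SX_def\<close>)
        have c4: "T C A (ord ?k' {q\<in>?S. ?k' i < ?k' q}) = tns C (A a1) (T C A (ord k SY))"
        proof -
          have "{q\<in>?S. ?k' i < ?k' q} = {a1} \<union> SY" unfolding kk SY_def using ki True a1S snoc(6,8)
            by (auto simp: adj_def dest: clsD)
          moreover have "ord ?k' SY = ord k SY" by (rule OC) (use SLs True in \<open>auto simp: SY_def\<close>)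
          moreover have "T C A (ord ?k' ({a1} \<union> SY)) = tns C (T C A (ord ?k' {a1})) (T C A (ord ?k' SY))"
            by (rule TU2[OF finS inj'' ob]) (use a1S snoc(6,8) True in \<open>auto simp: SY_def adj_simps\<close>)
          ultimately show ?thesis using obs by (simp only: ord_single T_single)
        qed
        have c5: "T C A (ord k {q\<in>?S. k q < k i}) = tns C (T C A (ord k SX)) (A a1)"
        proof -
          have "{q\<in>?S. k q < k i} = SX \<union> {a1}" unfolding SX_def using ki True a1S snoc(6,8)
            by (auto simp: nat_neq_iff dest: clsD)
          moreover have "T C A (ord k (SX \<union> {a1})) = tns C (T C A (ord k SX)) (T C A (ord k {a1}))"
            by (rule TU2[OF finS inj' ob]) (use a1S snoc(6,8) True in \<open>auto simp: SX_def\<close>)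
          ultimately show ?thesis using obs by (simp only: ord_single T_single)
        qed
        have c6: "{q\<in>?S. k i < k q} = SY" unfolding SY_def True ..
        have Q: "tnsm C (idm C (tns C (T C A (ord k SX)) (A a1))) (brd C (T C A (ord k SY)) (A i)) \<in> mor C"
          "dm C (tnsm C (idm C (tns C (T C A (ord k SX)) (A a1))) (brd C (T C A (ord k SY)) (A i)))
            = cd C (tnsm C (canon C A k xs) (idm C (A i)))"
          using obs obs0 ty c1 by auto
        show ?thesis
          unfolding canon_snoc cc c2 c3 c4 sx t1 t2 c5 c6 ia[symmetric]
          using algD[OF obs0(1) obs obs0(3) obs0(2)] Q obs obs0 ty
          by (subst cmp_assoc[symmetric]) auto
      qed
    qed
  qed
qed


end

definition adjw :: "nat list \<Rightarrow> nat \<Rightarrow> nat" where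
  "adjw js = foldr (\<lambda>j p. adj j \<circ> p) js id"

lemma adjw_Nil[simp]: "adjw [] = id" by (simp add: adjw_def)
lemma adjw_Cons[simp]: "adjw (j # js) = adj j \<circ> adjw js" by (simp add: adjw_def)
lemma adjw_append: "adjw (xs @ ys) = adjw xs \<circ> adjw ys"
  by (induct xs) (auto simp: comp_assoc)

lemma adj_transpose: "adj j = Transposition.transpose j (Suc j)"
  by (auto simp: adj_def transpose_def fun_eq_iff)

lemma adj_permutes: "1 \<le> j \<Longrightarrow> j < K \<Longrightarrow> adj j permutes {1..K}"
  unfolding adj_transpose by (rule permutes_swap_id) auto

lemma reach_adjw:
  assumes "\<forall>j\<in>set js. 1 \<le> j \<and> j < K" "coh_rel C A K \<sigma> f"
  shows "\<exists>g. coh_rel C A K (adjw js \<circ> \<sigma>) g"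
  using assms
proof (induct js)
  case Nil
  then show ?case by auto
next
  case (Cons j js)
  then obtain g where "coh_rel C A K (adjw js \<circ> \<sigma>) g" by (meson list.set_intros(2))
  then have "coh_rel C A K (adj j \<circ> (adjw js \<circ> \<sigma>)) (cmp C (swapmap C (A \<circ> inv (adjw js \<circ> \<sigma>)) K j) g)"
    using Cons(2) by (intro coh_rel.step) auto
  then show ?case by (metis adjw_Cons comp_assoc)
qed

lemma transpose_adjw_aux:
  assumes "1 \<le> a" "Suc a + d \<le> K"
  shows "\<exists>js. (\<forall>j\<in>set js. 1 \<le> j \<and> j < K) \<and> Transposition.transpose a (Suc a + d) = adjw js"
  using assms
proof (induct d)
  case 0
  then show ?case by (intro exI[of _ "[a]"]) (auto simp: adj_transpose)
next
  case (Suc d)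
  then obtain js where js: "\<forall>j\<in>set js. 1 \<le> j \<and> j < K" "Transposition.transpose a (Suc a + d) = adjw js" by auto
  have "Transposition.transpose a (Suc a + Suc d) = adj (Suc a + d) \<circ> Transposition.transpose a (Suc a + d) \<circ> adj (Suc a + d)"
    by (auto simp: adj_def transpose_def fun_eq_iff)
  also have "\<dots> = adjw ([Suc a + d] @ js @ [Suc a + d])" using js(2) by (simp add: adjw_append comp_assoc)
  finally show ?case using js(1) Suc(2,3) by (intro exI[of _ "[Suc a + d] @ js @ [Suc a + d]"]) auto
qed

lemma coh_rel_exists:
  assumes "\<sigma> permutes {1..K}"
  shows "\<exists>f. coh_rel C A K \<sigma> f"
  using assms finite_atLeastAtMost
proof (induct \<sigma> rule: permutes_induct)
  case id
  then show ?case using coh_rel.base by blast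
next
  case (swap a b p)
  then obtain f where f: "coh_rel C A K p f" by auto
  have "\<exists>js. (\<forall>j\<in>set js. 1 \<le> j \<and> j < K) \<and> Transposition.transpose a b = adjw js"
  proof (cases "a < b")
    case True
    then show ?thesis using transpose_adjw_aux[of a "b - Suc a" K] swap(1,2) by auto
  next
    case False
    then have "b < a" using swap(3) by auto
    then show ?thesis using transpose_adjw_aux[of b "a - Suc b" K] swap(1,2) by (auto simp: transpose_commute)
  qed
  then show ?case using reach_adjw f by metis
qed


lemma ord_perm_range:
  assumes p: "\<sigma> permutes {1..K}" and ab: "1 \<le> a" "b \<le> Suc K"
  shows "ord \<sigma> {q\<in>{1..K}. a \<le> \<sigma> q \<and> \<sigma> q < b} = map (inv \<sigma>) [a..<b]"
proof (rule ord_char)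
  have ip: "inv \<sigma> permutes {1..K}" using permutes_inv[OF p] .
  show "finite {q\<in>{1..K}. a \<le> \<sigma> q \<and> \<sigma> q < b}" by auto
  show "inj_on \<sigma> {q\<in>{1..K}. a \<le> \<sigma> q \<and> \<sigma> q < b}" using permutes_inj[OF p] by (auto simp: inj_on_def inj_def)
  show "distinct (map (inv \<sigma>) [a..<b])" using permutes_inj[OF ip] by (simp add: distinct_map inj_on_def inj_def)
  show "set (map (inv \<sigma>) [a..<b]) = {q\<in>{1..K}. a \<le> \<sigma> q \<and> \<sigma> q < b}"
  proof (intro set_eqI iffI)
    fix q assume "q \<in> set (map (inv \<sigma>) [a..<b])"
    then obtain v where v: "v \<in> {a..<b}" "q = inv \<sigma> v" by auto
    then have "v \<in> {1..K}" using ab by auto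
    then show "q \<in> {q\<in>{1..K}. a \<le> \<sigma> q \<and> \<sigma> q < b}"
      using v permutes_inverses[OF p] permutes_in_image[OF ip] by auto
  next
    fix q assume q: "q \<in> {q\<in>{1..K}. a \<le> \<sigma> q \<and> \<sigma> q < b}"
    then have "q = inv \<sigma> (\<sigma> q)" using permutes_inverses[OF p] by auto
    then show "q \<in> set (map (inv \<sigma>) [a..<b])" using q by (auto intro!: image_eqI)
  qed
  show "sorted (map \<sigma> (map (inv \<sigma>) [a..<b]))"
    by (simp add: permutes_inverses[OF p] comp_def)
qed

context pc
begin

lemma canon_sorted:
  assumes "distinct xs" "sorted (map k xs)" "inj_on k (set xs)" "\<And>i. i \<in> set xs \<Longrightarrow> A i \<in> obj C"
  shows "canon C A k xs = idm C (T C A xs)"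
  using assms
proof (induct xs rule: rev_induct)
  case Nil
  then show ?case by simp
next
  case (snoc i xs)
  have IH: "canon C A k xs = idm C (T C A xs)" using snoc by (auto simp: inj_on_def sorted_append)
  have lt: "k q < k i" if q: "q \<in> set xs" for q
  proof -
    have "k q \<le> k i" using snoc(3) q by (auto simp: sorted_append)
    moreover have "k q \<noteq> k i" using snoc(2,4) q by (auto simp: inj_on_def)
    ultimately show ?thesis by simp
  qed
  have e1: "{j\<in>set xs. k j < k i} = set xs" using lt by auto
  have e2: "{j\<in>set xs. k i < k j} = {}" using lt by (auto dest: less_not_sym)
  have o1: "ord k (set xs) = xs" by (rule ord_char) (use snoc in \<open>auto simp: inj_on_def sorted_append\<close>)
  have ob: "A i \<in> obj C" "T C A xs \<in> obj C" using snoc by auto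
  show ?case unfolding canon_snoc e1 e2 o1 IH using ob snoc(5) by (simp add: T_snoc)
qed

lemma coh_rel_canon:
  assumes "coh_rel C A K \<sigma> f" "\<And>i. i \<in> {1..K} \<Longrightarrow> A i \<in> obj C"
  shows "\<sigma> permutes {1..K} \<and> f = canon C A \<sigma> [1..<Suc K]"
  using assms
proof (induct rule: coh_rel.induct)
  case base
  have "canon C A id [1..<Suc K] = idm C (T C A [1..<Suc K])"
    by (rule canon_sorted) (use base in \<open>auto simp del: upt_Suc\<close>)
  moreover have "tprod C A 1 K = T C A [1..<Suc K]" by (simp only: tprod_def T_def)
  ultimately show ?case using permutes_id by metis
next
  case (step \<sigma> f j)
  then have p: "\<sigma> permutes {1..K}" and f: "f = canon C A \<sigma> [1..<Suc K]" by auto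
  have ip: "inv \<sigma> permutes {1..K}" using permutes_inv[OF p] .
  have sxs: "set [1..<Suc K] = {1..K}" by auto
  let ?a1 = "inv \<sigma> j" and ?a2 = "inv \<sigma> (Suc j)"
  have m1: "?a1 \<in> {1..K}" using permutes_in_image[OF ip, of j] step(3,4) by auto
  have m2: "?a2 \<in> {1..K}" using permutes_in_image[OF ip, of "Suc j"] step(3,4) by auto
  have a12: "?a1 \<in> set [1..<Suc K]" "\<sigma> ?a1 = j" "?a2 \<in> set [1..<Suc K]" "\<sigma> ?a2 = Suc j"
    unfolding sxs using m1 m2 permutes_inverses[OF p] by auto
  have CA: "canon C A (adj j \<circ> \<sigma>) [1..<Suc K] = cmp C (tnsm C (tnsm C (idm C (T C A (ord \<sigma> {q\<in>set [1..<Suc K]. \<sigma> q < j})))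
      (brd C (A ?a1) (A ?a2))) (idm C (T C A (ord \<sigma> {q\<in>set [1..<Suc K]. Suc j < \<sigma> q})))) (canon C A \<sigma> [1..<Suc K])"
    by (rule canon_adj) (use a12 step(5) permutes_inj[OF p] in \<open>auto simp: inj_on_def inj_def\<close>)
  have pin: "1 \<le> \<sigma> q \<and> \<sigma> q < Suc K" if "q \<in> {1..K}" for q
    using permutes_in_image[OF p, of q] that by simp
  have s1: "{q\<in>set [1..<Suc K]. \<sigma> q < j} = {q\<in>{1..K}. 1 \<le> \<sigma> q \<and> \<sigma> q < j}"
    unfolding sxs using pin by blast
  have s2: "{q\<in>set [1..<Suc K]. Suc j < \<sigma> q} = {q\<in>{1..K}. Suc (Suc j) \<le> \<sigma> q \<and> \<sigma> q < Suc K}"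
    unfolding sxs using pin by (auto simp: Suc_le_eq)
  have o1: "T C A (ord \<sigma> {q\<in>set [1..<Suc K]. \<sigma> q < j}) = tprod C (A \<circ> inv \<sigma>) 1 (j - 1)"
  proof -
    have "ord \<sigma> {q\<in>{1..K}. 1 \<le> \<sigma> q \<and> \<sigma> q < j} = map (inv \<sigma>) [1..<j]"
      by (rule ord_perm_range[OF p]) (use step(3,4) in auto)
    moreover have "[1..<Suc (j - 1)] = [1..<j]" using step(3) by simp
    ultimately show ?thesis unfolding s1 tprod_def by (simp only: T_def map_map)
  qed
  have o2: "T C A (ord \<sigma> {q\<in>set [1..<Suc K]. Suc j < \<sigma> q}) = tprod C (A \<circ> inv \<sigma>) (j + 2) K"
  proof -
    have "ord \<sigma> {q\<in>{1..K}. Suc (Suc j) \<le> \<sigma> q \<and> \<sigma> q < Suc K} = map (inv \<sigma>) [Suc (Suc j)..<Suc K]"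
      by (rule ord_perm_range[OF p]) (use step(3,4) in auto)
    moreover have "j + 2 = Suc (Suc j)" by simp
    ultimately show ?thesis unfolding s2 tprod_def by (simp only: T_def map_map)
  qed
  have "cmp C (swapmap C (A \<circ> inv \<sigma>) K j) f = canon C A (adj j \<circ> \<sigma>) [1..<Suc K]"
    unfolding CA o1 o2 f swapmap_def by simp
  moreover have "adj j \<circ> \<sigma> permutes {1..K}" by (rule permutes_compose[OF p adj_permutes]) (use step in auto)
  ultimately show ?case by blast
qed

lemma coh_iso_canon:
  assumes "\<sigma> permutes {1..K}" "\<And>i. i \<in> {1..K} \<Longrightarrow> A i \<in> obj C"
  shows "coh_iso C A K \<sigma> = canon C A \<sigma> [1..<Suc K]"
proof -
  have "coh_rel C A K \<sigma> (coh_iso C A K \<sigma>)"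
    unfolding coh_iso_def by (rule someI_ex[OF coh_rel_exists[OF assms(1)]])
  then show ?thesis using coh_rel_canon assms(2) by blast
qed

end


lemma exists_perm_ext:
  fixes K :: nat and u :: "nat \<Rightarrow> nat"
  assumes S: "S \<subseteq> {1..K}" and inj: "inj_on u S" and uS: "u ` S \<subseteq> {1..K}"
  shows "\<exists>\<sigma>. \<sigma> permutes {1..K} \<and> (\<forall>i\<in>S. \<sigma> i = u i)"
proof -
  have fS: "finite S" using S finite_subset by blast
  have "card ({1..K} - S) = card ({1..K} - u ` S)"
  proof -
    have "card ({1..K} - S) = K - card S" using S fS by (simp add: card_Diff_subset)
    moreover have "card ({1..K} - u ` S) = K - card (u ` S)" using uS fS by (simp add: card_Diff_subset)
    ultimately show ?thesis using card_image[OF inj] by simp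
  qed
  then obtain h where h: "bij_betw h ({1..K} - S) ({1..K} - u ` S)"
    using finite_same_card_bij by blast
  define \<sigma> where "\<sigma> i = (if i \<in> S then u i else if i \<in> {1..K} then h i else i)" for i
  have hB: "\<And>y. y \<in> {1..K} - S \<Longrightarrow> h y \<in> {1..K} - u ` S" using bij_betwE[OF h] by blast
  have im: "\<sigma> ` {1..K} \<subseteq> {1..K}"
  proof
    fix y assume "y \<in> \<sigma> ` {1..K}"
    then obtain x where x: "x \<in> {1..K}" "y = \<sigma> x" by blast
    show "y \<in> {1..K}"
    proof (cases "x \<in> S")
      case True then show ?thesis using x uS unfolding \<sigma>_def by auto
    next
      case False then show ?thesis using x hB[of x] unfolding \<sigma>_def by auto
    qed
  qed
  have ij: "inj_on \<sigma> {1..K}"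
  proof (rule inj_onI)
    fix x y assume xy: "x \<in> {1..K}" "y \<in> {1..K}" "\<sigma> x = \<sigma> y"
    show "x = y"
    proof (cases "x \<in> S"; cases "y \<in> S")
      assume "x \<in> S" "y \<in> S" then show ?thesis using xy inj unfolding \<sigma>_def by (auto simp: inj_on_def)
    next
      assume a: "x \<in> S" "y \<notin> S"
      then have "\<sigma> y \<in> {1..K} - u ` S" using hB[of y] xy unfolding \<sigma>_def by auto
      then show ?thesis using a xy unfolding \<sigma>_def by (auto simp: image_iff)
    next
      assume a: "x \<notin> S" "y \<in> S"
      then have "\<sigma> x \<in> {1..K} - u ` S" using hB[of x] xy unfolding \<sigma>_def by auto
      then show ?thesis using a xy unfolding \<sigma>_def by (auto simp: image_iff)
    next
      assume a: "x \<notin> S" "y \<notin> S"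
      then show ?thesis using h xy unfolding \<sigma>_def bij_betw_def inj_on_def by auto
    qed
  qed
  have "bij_betw \<sigma> {1..K} {1..K}" using endo_inj_surj[OF _ im ij] ij by (simp add: bij_betw_def)
  moreover have "\<And>x. x \<notin> {1..K} \<Longrightarrow> \<sigma> x = x" using S unfolding \<sigma>_def by auto
  ultimately have "\<sigma> permutes {1..K}" by (rule bij_imp_permutes)
  moreover have "\<forall>i\<in>S. \<sigma> i = u i" unfolding \<sigma>_def by simp
  ultimately show ?thesis by blast
qed

theorem corollary2p14:
  fixes C :: "('o, 'm) pcat" and X :: "nat \<Rightarrow> 'o" and u :: "nat \<Rightarrow> nat"
  assumes "permutative_category C"
    and "Phi_obj C X"
    and "inj_omega u"
  defines "m \<equiv> card (supp C X)"
    and "I \<equiv> (\<lambda>j. sorted_list_of_set (supp C X) ! (j - 1))"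
  shows "(\<exists>!\<sigma>. \<sigma> permutes {1..m} \<and>
            (\<forall>a b. 1 \<le> a \<longrightarrow> a < b \<longrightarrow> b \<le> m \<longrightarrow> u (I (inv \<sigma> a)) < u (I (inv \<sigma> b)))) \<and>
          (\<forall>\<sigma>. \<sigma> permutes {1..m} \<and>
            (\<forall>a b. 1 \<le> a \<longrightarrow> a < b \<longrightarrow> b \<le> m \<longrightarrow> u (I (inv \<sigma> a)) < u (I (inv \<sigma> b)))
          \<longrightarrow> struct_iso C u X = coh_iso C (X \<circ> I) m \<sigma>)"
proof -
  interpret pc C by standard (rule assms(1))
  define S where "S = supp C X"
  define Ls where "Ls = sorted_list_of_set S"
  have finS: "finite S" using assms(2) unfolding Phi_obj_def S_def by auto
  have S1: "\<And>i. i \<in> S \<Longrightarrow> 1 \<le> i" "\<And>i. i \<in> S \<Longrightarrow> X i \<noteq> unt C" unfolding S_def supp_def by auto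
  have Xobj: "\<And>i. 1 \<le> i \<Longrightarrow> X i \<in> obj C" using assms(2) unfolding Phi_obj_def by auto
  have uinj: "inj_on u {1..}" and uim: "u ` {1..} \<subseteq> {1..}" using assms(3) unfolding inj_omega_def by auto
  have uinjS: "inj_on u S" using uinj S1 by (auto intro: inj_on_subset)
  have lenLs: "length Ls = m" unfolding Ls_def m_def S_def by simp
  have setLs: "set Ls = S" unfolding Ls_def using finS by simp
  have dLs: "distinct Ls" "sorted Ls" unfolding Ls_def by auto
  have Ieq: "I j = Ls ! (j - 1)" for j unfolding I_def Ls_def S_def by simp
  have mapI: "map I [1..<Suc m] = Ls"
    by (rule nth_equalityI) (auto simp: lenLs Ieq simp del: upt_Suc)
  have IS: "I j \<in> S" if "j \<in> {1..m}" for j using that setLs lenLs Ieq by (auto simp: nth_mem)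
  have Iinj: "inj_on I {1..m}"
  proof (rule inj_onI)
    fix a b assume "a \<in> {1..m}" "b \<in> {1..m}" "I a = I b"
    then show "a = b" using dLs(1) lenLs Ieq by (auto simp: nth_eq_iff_index_eq)
  qed
  have kinj: "inj_on (u \<circ> I) {1..m}"
    using comp_inj_on[OF Iinj] uinjS IS by (metis (no_types, lifting) image_subsetI inj_on_subset)
  define P where "P \<sigma> \<longleftrightarrow> \<sigma> permutes {1..m} \<and>
            (\<forall>a b. 1 \<le> a \<longrightarrow> a < b \<longrightarrow> b \<le> m \<longrightarrow> u (I (inv \<sigma> a)) < u (I (inv \<sigma> b)))" for \<sigma>
  define \<rho> where "\<rho> = ord (u \<circ> I) {1..m}"
  have \<rho>: "distinct \<rho>" "set \<rho> = {1..m}" "sorted (map (u \<circ> I) \<rho>)" unfolding \<rho>_def using ord_props by auto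
  have len\<rho>: "length \<rho> = m" using distinct_card[OF \<rho>(1)] \<rho>(2) by simp
  have charP: "map (inv \<sigma>) [1..<Suc m] = \<rho>" if "P \<sigma>" for \<sigma>
  proof -
    have p: "\<sigma> permutes {1..m}" and mono: "\<And>a b. 1 \<le> a \<Longrightarrow> a < b \<Longrightarrow> b \<le> m \<Longrightarrow> u (I (inv \<sigma> a)) < u (I (inv \<sigma> b))"
      using that unfolding P_def by auto
    have ip: "inv \<sigma> permutes {1..m}" using permutes_inv[OF p] .
    show ?thesis unfolding \<rho>_def
    proof (rule ord_char[symmetric])
      show "finite {1..m}" "inj_on (u \<circ> I) {1..m}" using kinj by auto
      show "distinct (map (inv \<sigma>) [1..<Suc m])" using permutes_inj[OF ip] by (simp add: distinct_map inj_on_def inj_def)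
      show "set (map (inv \<sigma>) [1..<Suc m]) = {1..m}"
        using permutes_image[OF ip] by (simp only: set_map set_upt atLeastLessThanSuc_atLeastAtMost)
      show "sorted (map (u \<circ> I) (map (inv \<sigma>) [1..<Suc m]))"
        unfolding sorted_iff_nth_mono_less
      proof (intro allI impI)
        fix i j assume ij: "i < j" "j < length (map (u \<circ> I) (map (inv \<sigma>) [1..<Suc m]))"
        then have "j < m" by (simp del: upt_Suc)
        then show "map (u \<circ> I) (map (inv \<sigma>) [1..<Suc m]) ! i \<le> map (u \<circ> I) (map (inv \<sigma>) [1..<Suc m]) ! j"
          using mono[of "Suc i" "Suc j"] ij by (simp del: upt_Suc)
      qed
    qed
  qed
  have rhoM: "\<rho> ! (a - 1) \<in> {1..m}" if "a \<in> {1..m}" for a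
  proof -
    have "a - 1 < length \<rho>" using that len\<rho> by auto
    then have "\<rho> ! (a - 1) \<in> set \<rho>" by (rule nth_mem)
    then show ?thesis using \<rho>(2) by simp
  qed
  define \<tau> where "\<tau> a = (if a \<in> {1..m} then \<rho> ! (a - 1) else a)" for a
  have \<tau>p: "\<tau> permutes {1..m}"
  proof (rule bij_imp_permutes)
    have "inj_on \<tau> {1..m}"
      using \<rho>(1) len\<rho> unfolding \<tau>_def by (auto simp: inj_on_def nth_eq_iff_index_eq)
    moreover have "\<tau> ` {1..m} \<subseteq> {1..m}" using rhoM unfolding \<tau>_def by auto
    ultimately show "bij_betw \<tau> {1..m} {1..m}" using endo_inj_surj[of "{1..m}" \<tau>] by (simp add: bij_betw_def)
    show "\<And>x. x \<notin> {1..m} \<Longrightarrow> \<tau> x = x" unfolding \<tau>_def by auto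
  qed
  define \<sigma>0 where "\<sigma>0 = inv \<tau>"
  have \<sigma>0p: "\<sigma>0 permutes {1..m}" unfolding \<sigma>0_def using permutes_inv[OF \<tau>p] .
  have inv\<sigma>0: "inv \<sigma>0 = \<tau>" unfolding \<sigma>0_def using \<tau>p by (simp add: inv_inv_eq permutes_bij)
  have P0: "P \<sigma>0"
    unfolding P_def
  proof (intro conjI allI impI \<sigma>0p)
    fix a b assume ab: "1 \<le> a" "a < b" "b \<le> m"
    have la: "a - 1 < length \<rho>" "b - 1 < length \<rho>" "a - 1 \<le> b - 1" using ab len\<rho> by auto
    have le0: "map (u \<circ> I) \<rho> ! (a - 1) \<le> map (u \<circ> I) \<rho> ! (b - 1)"
      by (rule sorted_nth_mono[OF \<rho>(3)]) (use la in auto)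
    have le: "(u \<circ> I) (\<rho> ! (a - 1)) \<le> (u \<circ> I) (\<rho> ! (b - 1))" using le0 la by simp
    have ne: "\<rho> ! (a - 1) \<noteq> \<rho> ! (b - 1)" using \<rho>(1) la ab by (simp add: nth_eq_iff_index_eq)
    have mem: "\<rho> ! (a - 1) \<in> {1..m}" "\<rho> ! (b - 1) \<in> {1..m}" using rhoM ab by auto
    have ne2: "(u \<circ> I) (\<rho> ! (a - 1)) \<noteq> (u \<circ> I) (\<rho> ! (b - 1))" using inj_onD[OF kinj _ mem] ne by blast
    have ta: "\<tau> a = \<rho> ! (a - 1)" "\<tau> b = \<rho> ! (b - 1)" using ab unfolding \<tau>_def by auto
    show "u (I (inv \<sigma>0 a)) < u (I (inv \<sigma>0 b))" unfolding inv\<sigma>0 ta using le ne2 by simp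
  qed
  have uniq: "\<sigma>1 = \<sigma>2" if "P \<sigma>1" "P \<sigma>2" for \<sigma>1 \<sigma>2
  proof -
    have p1: "\<sigma>1 permutes {1..m}" and p2: "\<sigma>2 permutes {1..m}" using that unfolding P_def by auto
    have "map (inv \<sigma>1) [1..<Suc m] = map (inv \<sigma>2) [1..<Suc m]" using charP that by simp
    then have "\<forall>x\<in>{1..m}. inv \<sigma>1 x = inv \<sigma>2 x" by (metis map_eq_conv atLeastLessThanSuc_atLeastAtMost set_upt)
    moreover have "\<forall>x. x \<notin> {1..m} \<longrightarrow> inv \<sigma>1 x = inv \<sigma>2 x"
      using permutes_not_in[OF permutes_inv[OF p1]] permutes_not_in[OF permutes_inv[OF p2]] by auto
    ultimately have "inv \<sigma>1 = inv \<sigma>2" by blast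
    then show ?thesis using p1 p2 by (metis inv_inv_eq permutes_bij)
  qed
  have part1: "\<exists>!\<sigma>. P \<sigma>" using P0 uniq by blast
  define V where "V = canon C X u Ls"
  have objS: "\<And>i. i \<in> set Ls \<Longrightarrow> X i \<in> obj C" using setLs S1 Xobj by auto
  have witness_eq: "f = V" if wit: "\<exists>K \<sigma>'. (\<forall>i>K. X i = unt C \<and> push C u X i = unt C) \<and> \<sigma>' permutes {1..K} \<and>
      (\<forall>i\<in>{1..K}. X i \<noteq> unt C \<longrightarrow> \<sigma>' i = u i) \<and> f = coh_iso C X K \<sigma>'" for f
  proof -
    obtain K \<sigma>' where K: "\<forall>i>K. X i = unt C \<and> push C u X i = unt C" and p: "\<sigma>' permutes {1..K}"
      and agree: "\<forall>i\<in>{1..K}. X i \<noteq> unt C \<longrightarrow> \<sigma>' i = u i" and f: "f = coh_iso C X K \<sigma>'"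
      using wit by blast
    have SK: "S \<subseteq> {1..K}" using K S1 by (auto simp: not_le[symmetric])
    have f1: "f = canon C X \<sigma>' [1..<Suc K]" unfolding f by (rule coh_iso_canon[OF p]) (use Xobj in auto)
    have injK: "inj_on \<sigma>' (set [1..<Suc K])" using permutes_inj[OF p] by (auto simp: inj_on_def inj_def)
    have f2: "canon C X \<sigma>' [1..<Suc K] = canon C X \<sigma>' (filter (\<lambda>i. X i \<noteq> unt C) [1..<Suc K])"
      by (rule canon_filter_unt[symmetric]) (use injK Xobj in auto)
    have fl: "filter (\<lambda>i. X i \<noteq> unt C) [1..<Suc K] = Ls"
    proof -
      have "set (filter (\<lambda>i. X i \<noteq> unt C) [1..<Suc K]) = S" using SK unfolding S_def supp_def by auto
      moreover have "sorted (filter (\<lambda>i. X i \<noteq> unt C) [1..<Suc K])"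
        by (rule sorted_wrt_filter) (simp del: upt_Suc)
      moreover have "distinct (filter (\<lambda>i. X i \<noteq> unt C) [1..<Suc K])" by (simp del: upt_Suc)
      ultimately show ?thesis unfolding Ls_def using sorted_list_of_set.idem_if_sorted_distinct by metis
    qed
    have ag2: "\<sigma>' i = u i" if "i \<in> set Ls" for i
    proof -
      have "i \<in> S" using that setLs by simp
      then show ?thesis using SK S1(2) agree by blast
    qed
    have f3: "canon C X \<sigma>' Ls = canon C X u Ls"
      by (rule canon_cong) (use dLs uinjS setLs ag2 in auto)
    show ?thesis using f1 f2 fl f3 unfolding V_def by simp
  qed
  have witness_ex: "\<exists>f. \<exists>K \<sigma>'. (\<forall>i>K. X i = unt C \<and> push C u X i = unt C) \<and> \<sigma>' permutes {1..K} \<and>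
      (\<forall>i\<in>{1..K}. X i \<noteq> unt C \<longrightarrow> \<sigma>' i = u i) \<and> f = coh_iso C X K \<sigma>'"
  proof -
    define K where "K = Max (insert 0 (S \<union> u ` S))"
    have fin: "finite (insert 0 (S \<union> u ` S))" using finS by simp
    have SK: "S \<subseteq> {1..K}"
    proof
      fix x assume x: "x \<in> S"
      have "x \<le> K" unfolding K_def by (rule Max_ge[OF fin]) (use x in auto)
      then show "x \<in> {1..K}" using S1(1)[OF x] by auto
    qed
    have uSK: "u ` S \<subseteq> {1..K}"
    proof
      fix y assume "y \<in> u ` S"
      then obtain x where x: "x \<in> S" "y = u x" by blast
      have "u x \<in> {1..}" using uim S1(1)[OF x(1)] by auto
      moreover have "u x \<le> K" unfolding K_def by (rule Max_ge[OF fin]) (use x in auto)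
      ultimately show "y \<in> {1..K}" using x by auto
    qed
    obtain \<sigma>' where p: "\<sigma>' permutes {1..K}" and ag: "\<forall>i\<in>S. \<sigma>' i = u i"
      using exists_perm_ext[OF SK uinjS uSK] by blast
    have K1: "\<forall>i>K. X i = unt C \<and> push C u X i = unt C"
    proof (intro allI impI conjI)
      fix i assume i: "K < i"
      show "X i = unt C"
      proof (rule ccontr)
        assume "X i \<noteq> unt C"
        then have "i \<in> S" using i unfolding S_def supp_def by auto
        then show False using SK i by auto
      qed
      show "push C u X i = unt C"
      proof (cases "i \<in> u ` {1..}")
        case True
        then obtain j where j: "j \<in> {1..}" "i = u j" by auto
        have "the_inv_into {1..} u i = j" using the_inv_into_f_f[OF uinj j(1)] j(2) by simp
        moreover have "j \<notin> S" using uSK j i by auto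
        ultimately show ?thesis using True j unfolding push_def S_def supp_def by auto
      next
        case False
        then show ?thesis unfolding push_def by auto
      qed
    qed
    have ag': "\<forall>i\<in>{1..K}. X i \<noteq> unt C \<longrightarrow> \<sigma>' i = u i" using ag unfolding S_def supp_def by auto
    show ?thesis using K1 p ag' by blast
  qed
  have SI: "struct_iso C u X = V"
    unfolding struct_iso_def by (rule someI2_ex[OF witness_ex]) (rule witness_eq)
  have sxm: "set [1..<Suc m] = {1..m}" by (simp only: set_upt atLeastLessThanSuc_atLeastAtMost)
  have part2: "struct_iso C u X = coh_iso C (X \<circ> I) m \<sigma>" if "P \<sigma>" for \<sigma>
  proof -
    have p: "\<sigma> permutes {1..m}" and mono: "\<And>a b. 1 \<le> a \<Longrightarrow> a < b \<Longrightarrow> b \<le> m \<Longrightarrow> u (I (inv \<sigma> a)) < u (I (inv \<sigma> b))"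
      using that unfolding P_def by auto
    have c1: "coh_iso C (X \<circ> I) m \<sigma> = canon C (X \<circ> I) \<sigma> [1..<Suc m]"
      by (rule coh_iso_canon[OF p]) (use IS S1 Xobj in auto)
    have c2: "canon C (X \<circ> I) \<sigma> [1..<Suc m] = canon C (X \<circ> I) (u \<circ> I) [1..<Suc m]"
    proof (rule canon_cong)
      show "distinct [1..<Suc m]" by simp
      show "inj_on (u \<circ> I) (set [1..<Suc m])" using kinj by (simp only: set_upt atLeastLessThanSuc_atLeastAtMost)
      fix a b assume ab: "a \<in> set [1..<Suc m]" "b \<in> set [1..<Suc m]"
      have ab': "a \<in> {1..m}" "b \<in> {1..m}" using ab unfolding sxm .
      have sa: "\<sigma> a \<in> {1..m}" "\<sigma> b \<in> {1..m}" using ab' by (simp_all only: permutes_in_image[OF p])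
      have ia: "inv \<sigma> (\<sigma> a) = a" "inv \<sigma> (\<sigma> b) = b" using permutes_inverses[OF p] by auto
      have d1: "u (I a) < u (I b)" if "\<sigma> a < \<sigma> b" using mono[of "\<sigma> a" "\<sigma> b"] sa that ia by auto
      have d2: "u (I b) < u (I a)" if "\<sigma> b < \<sigma> a" using mono[of "\<sigma> b" "\<sigma> a"] sa that ia by auto
      have d3: "a = b" if "\<sigma> a = \<sigma> b" using that ia by metis
      show "(u \<circ> I) a < (u \<circ> I) b \<longleftrightarrow> \<sigma> a < \<sigma> b"
        by (rule linorder_cases[of "\<sigma> a" "\<sigma> b"]) (use d1 d2 d3 in auto)
    qed
    have c3: "canon C (X \<circ> I) (u \<circ> I) [1..<Suc m] = canon C X u Ls"
    proof -
      have i1: "inj_on I (set [1..<Suc m])" using Iinj unfolding sxm .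
      have "I ` set [1..<Suc m] \<subseteq> S" unfolding sxm using IS by blast
      then have i2: "inj_on u (I ` set [1..<Suc m])" using inj_on_subset[OF uinjS] by blast
      have "canon C X u (map I [1..<Suc m]) = canon C (X \<circ> I) (u \<circ> I) [1..<Suc m]"
        by (rule canon_map[OF distinct_upt i1 i2])
      then show ?thesis using mapI by simp
    qed
    show ?thesis using SI c1 c2 c3 unfolding V_def by simp
  qed
  show ?thesis using part1 part2 unfolding P_def by blast
qed

end
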